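(* Let $E$ be a Borel space and $Q$ a semi-Markov kernel on $\mathbb{R}_+\times E$ given $E$ satisfying: there exist $\delta>0$, $\epsilon>0$ with $Q(\delta,E\mid x)\le1-\epsilon$ for all $x\in E$. Let $c,g:E\to[0,\infty)$ be measurable and $T\in\mathbb{R}_+$. Then for every $\pi=\{d_n,n\ge0\}\in\Pi^0_{DH}$, $$U^\pi(s,x)=V^{\tau^s_\pi}(s,x)\qquad\text{for all }x\in E,\ s\in[0,T],$$ where $\tau^s_\pi$ is the stopping time induced by $\pi$ and $s$.
   Context: SMP: Semi-Markov kernel means: for each $B\in\mathcal{B}(E)$, $x$, $t\mapsto Q(t,B\mid x)$ nondecreasing, right-continuous, $Q(0,B\mid x)=0$; $Q(t,\cdot\mid\cdot)$ substochastic; $\lim_{t\to\infty}Q(t,\cdot\mid\cdot)$ stochastic. $\Omega=\{(x_0,t_1,x_1,\dots): x_0\in E,(t_n,x_n)\in\mathbb{R}_+\times E\}$; $X_n(\omega)=x_n$, $T_0=0$, $T_{n+1}(\omega)=t_{n+1}$, $S_n=\sum_{k=0}^nT_k$, $Y_n=(X_0,T_1,X_1,\dots,T_n,X_n)$, $\mathcal{F}_n=\sigma(T_0,X_0,\dots,T_n,X_n)$; $\mathbb{P}_x$ is the unique probability with $\mathbb{P}_x(T_0=0,X_0=x)=1$ and $\mathbb{P}_x(T_{n+1}\le t,X_{n+1}\in B\mid Y_n)=Q(t,B\mid X_n)$, $\mathbb{E}_x$ its expectation; $X(t)=X_n$ for $S_n\le t<S_{n+1}$. A stopping time is $\tau:\Omega\to\mathbb{N}\cup\{\infty\}$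 with $\{\tau=n\}\in\mathcal{F}_n$. $R^s_\tau=\int_0^{S_\tau}c(X(t))\,dt+g(X(S_\tau))$ if $S_\tau<s$, and $\int_0^sc(X(t))\,dt$ if $S_\tau\ge s$ ($S_\tau=\lim_nS_n$ on $\{\tau=\infty\}$); $V^\tau(s,x)=\mathbb{E}_x[R^s_\tau]$. Constructed SMDP: $\hat E=E\cup\{\Delta\}$, $A=\{0,1\}$, $A(x)=\{0,1\}$ for $x\in E$, $A(\Delta)=\{1\}$; $\hat Q_T(t,B\mid x,0)=Q(t,B\setminus\{\Delta\}\mid x)$ for $x\in E$, $\hat Q_T(t,B\mid x,1)=\mathbf{1}_{[T+1,\infty)}(t)\delta_\Delta(B)$ for $x\in\hat E$; $\hat c(x,a)=c(x)$ if $x\in E,a=0$, else $0$; $\hat g(x,a)=g(x)$ if $x\in E,a=1$, else $0$. $\hat H_n$: histories $\hat h_n=(x_0,a_0,t_1,x_1,\dots,a_{n-1},t_n,x_n)$ with $a_m\in A(x_m)$. A deterministic policy $\pi=\{d_n\}$ consists of measurable $d_n:\mathbb{R}\times\hat H_n\to A$ with $d_n(s,\hat h_n)\in A(x_n)$; on $\hat\Omega=(\hat E\times A\times\mathbb{R}_+)^\infty$ with coordinates $\hat X_n,A_n,\hat T_{n+1}$, $\hat T_0=0$, $\hat S_n=\sum_{m\le n}\hat T_m$, $\hat Y_n=(\hat X_0,A_0,\hat T_1,\dots,\hat T_n,\hat X_n)$, $\hat{\mathbb{P}}^\pi_{(s,x)}$ is the unique probability with $\hat X_0=x$, $\hat T_0=0$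 a.s., $A_n=d_n(s-\hat S_n,\hat Y_n)$ a.s., and $\hat{\mathbb{P}}^\pi_{(s,x)}(\hat T_{n+1}\le t,\hat X_{n+1}\in B\mid\hat Y_n,A_n)=\hat Q_T(t,B\mid\hat X_n,A_n)$; $\hat X(t)=\hat X_n$, $A(t)=A_n$ for $\hat S_n\le t<\hat S_{n+1}$; $U^\pi(s,x)=\hat{\mathbb{E}}^\pi_{(s,x)}\big[\int_0^s\hat c(\hat X(t),A(t))\,dt+\hat g(\hat X(s),A(s))\big]$. $H^0_n=E\times(\{0\}\times\mathbb{R}_+\times E)^n\subset\hat H_n$; $\Pi^0_{DH}$ is the set of deterministic policies with $d_n(0,\hat h_n)=0$ for all $n$ and $\hat h_n\in H^0_n$. With $Y^0_n=(X_0,0,T_1,X_1,\dots,0,T_n,X_n)$, the stopping time induced by $\pi$ and $s\in\mathbb{R}$ is $\tau^s_\pi(\omega)=\inf\{n\in\mathbb{N}:d_n(s-S_n(\omega),Y^0_n(\omega))=1\}$, $\inf\emptyset=+\infty$. *)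

theory Defs
  imports "HOL-Probability.Probability"
begin

text \<open>The Borel space E is modelled as a Polish type 'e with its Borel sigma-algebra.
  The kernel Q(t,B|x) is rendered as the measure Q t x applied to B,
  i.e. Q(t,B|x) = measure (Q t x) B, for t >= 0.\<close>

definition semi_Markov_kernel :: "(real \<Rightarrow> 'e::polish_space \<Rightarrow> 'e measure) \<Rightarrow> bool" where
  "semi_Markov_kernel Q \<longleftrightarrow>
     (\<forall>t\<ge>0. \<forall>x. sets (Q t x) = sets (borel :: 'e measure) \<and> subprob_space (Q t x)) \<and>
     (\<forall>t\<ge>0. \<forall>B\<in>sets (borel :: 'e measure). (\<lambda>x. measure (Q t x) B) \<in> borel_measurable borel) \<and>
     (\<forall>x. \<forall>B\<in>sets (borel :: 'e measure).
        mono_on {0..} (\<lambda>t. measure (Q t x) B) \<and>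
        (\<forall>t\<ge>0. continuous (at_right t) (\<lambda>t. measure (Q t x) B)) \<and>
        measure (Q 0 x) B = 0) \<and>
     (\<forall>x. ((\<lambda>t. measure (Q t x) UNIV) \<longlongrightarrow> 1) at_top)"

text \<open>A sample point omega is a sequence with omega n = (x_n, t_{n+1}),
  i.e. omega = (x_0,t_1,x_1,t_2,...). T_0 = 0.\<close>

definition Omega :: "(nat \<Rightarrow> 'e::polish_space \<times> real) measure" where
  "Omega = (\<Pi>\<^sub>M n\<in>UNIV. (borel :: 'e measure) \<Otimes>\<^sub>M (borel :: real measure))"

text \<open>Measurable space of the histories Y_n = (X_0,T_1,X_1,...,T_n,X_n),
  represented as (omega restricted to {..<n}, x_n).\<close>
definition Hist :: "nat \<Rightarrow> ((nat \<Rightarrow> 'e::polish_space \<times> real) \<times> 'e) measure" where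
  "Hist n = (\<Pi>\<^sub>M m\<in>{..<n}. (borel :: 'e measure) \<Otimes>\<^sub>M (borel :: real measure)) \<Otimes>\<^sub>M (borel :: 'e measure)"

definition Yn :: "nat \<Rightarrow> (nat \<Rightarrow> 'e \<times> real) \<Rightarrow> (nat \<Rightarrow> 'e \<times> real) \<times> 'e" where
  "Yn n \<omega> = (restrict \<omega> {..<n}, fst (\<omega> n))"

text \<open>S_n = T_0 + ... + T_n, where T_{m+1} = snd (omega m).\<close>
definition Sn :: "nat \<Rightarrow> (nat \<Rightarrow> 'e \<times> real) \<Rightarrow> real" where
  "Sn n \<omega> = (\<Sum>m<n. snd (\<omega> m))"

definition Xt :: "real \<Rightarrow> (nat \<Rightarrow> 'e \<times> real) \<Rightarrow> 'e" where
  "Xt t \<omega> = fst (\<omega> (LEAST n. t < Sn (Suc n) \<omega>))"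

text \<open>P is (the unique) P_x: X_0 = x a.s. and
  P(T_{n+1} \<le> t, X_{n+1} \<in> B | Y_n) = Q(t,B|X_n), expressed by the defining
  property of conditional probability w.r.t. sigma(Y_n).\<close>
definition is_Px :: "(real \<Rightarrow> 'e::polish_space \<Rightarrow> 'e measure) \<Rightarrow> 'e \<Rightarrow> (nat \<Rightarrow> 'e \<times> real) measure \<Rightarrow> bool" where
  "is_Px Q x P \<longleftrightarrow>
     prob_space P \<and> sets P = sets Omega \<and>
     (AE \<omega> in P. fst (\<omega> 0) = x) \<and>
     (\<forall>n t B D. 0 \<le> t \<longrightarrow> B \<in> sets (borel :: 'e measure) \<longrightarrow> D \<in> sets (Hist n) \<longrightarrow>
        emeasure P {\<omega> \<in> space P. Yn n \<omega> \<in> D \<and> snd (\<omega> n) \<le> t \<and> fst (\<omega> (Suc n)) \<in> B}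
        = (\<integral>\<^sup>+ \<omega>. indicator {\<omega> \<in> space P. Yn n \<omega> \<in> D} \<omega> * ennreal (measure (Q t (fst (\<omega> n))) B) \<partial>P))"

text \<open>Extended state space E \<union> {Delta}: 'e option, None = Delta. Actions A = {0,1} \<subseteq> nat.\<close>

definition Ehat :: "'e::polish_space option measure" where
  "Ehat = sigma UNIV ({Some ` B | B. B \<in> sets (borel :: 'e measure)} \<union> {{None}})"

definition Aset :: "'e option \<Rightarrow> nat set" where
  "Aset x = (case x of Some _ \<Rightarrow> {0, 1} | None \<Rightarrow> {1})"

definition Qhat :: "(real \<Rightarrow> 'e \<Rightarrow> 'e measure) \<Rightarrow> real \<Rightarrow> real \<Rightarrow> 'e option set \<Rightarrow> 'e option \<Rightarrow> nat \<Rightarrow> real" where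
  "Qhat Q T t B x a =
     (case x of Some y \<Rightarrow> if a = 0 then measure (Q t y) (Some -` B)
                          else (if T + 1 \<le> t \<and> None \<in> B then 1 else 0)
              | None \<Rightarrow> (if T + 1 \<le> t \<and> None \<in> B then 1 else 0))"

definition chat :: "('e \<Rightarrow> real) \<Rightarrow> 'e option \<Rightarrow> nat \<Rightarrow> real" where
  "chat c x a = (case x of Some y \<Rightarrow> if a = 0 then c y else 0 | None \<Rightarrow> 0)"

definition ghat :: "('e \<Rightarrow> real) \<Rightarrow> 'e option \<Rightarrow> nat \<Rightarrow> real" where
  "ghat g x a = (case x of Some y \<Rightarrow> if a = 1 then g y else 0 | None \<Rightarrow> 0)"

text \<open>Sample points of the SMDP: omegahat n = (xhat_n, a_n, that_{n+1}).\<close>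
type_synonym 'e hpath = "nat \<Rightarrow> 'e option \<times> nat \<times> real"

definition StepM :: "('e::polish_space option \<times> nat \<times> real) measure" where
  "StepM = Ehat \<Otimes>\<^sub>M (count_space UNIV :: nat measure) \<Otimes>\<^sub>M (borel :: real measure)"

definition Omegahat :: "'e::polish_space hpath measure" where
  "Omegahat = (\<Pi>\<^sub>M n\<in>UNIV. StepM)"

text \<open>Histories hhat_n = (x_0,a_0,t_1,...,a_{n-1},t_n,x_n), represented as
  (h restricted to {..<n}, x_n).\<close>
definition HhatM :: "nat \<Rightarrow> ('e::polish_space hpath \<times> 'e option) measure" where
  "HhatM n = (\<Pi>\<^sub>M m\<in>{..<n}. StepM) \<Otimes>\<^sub>M Ehat"

definition Hhat :: "nat \<Rightarrow> ('e::polish_space hpath \<times> 'e option) set" where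
  "Hhat n = {(h, x) \<in> space (HhatM n).
               \<forall>m<n. 0 \<le> snd (snd (h m)) \<and> fst (snd (h m)) \<in> Aset (fst (h m))}"

text \<open>Deterministic (history dependent) policies: d n s h x is d_n(s, (h, x)).\<close>
definition det_policy :: "(nat \<Rightarrow> real \<Rightarrow> 'e::polish_space hpath \<Rightarrow> 'e option \<Rightarrow> nat) \<Rightarrow> bool" where
  "det_policy d \<longleftrightarrow>
     (\<forall>n. (\<lambda>(s, hx). d n s (fst hx) (snd hx))
            \<in> measurable (restrict_space ((borel :: real measure) \<Otimes>\<^sub>M HhatM n) (UNIV \<times> Hhat n))
                         (count_space UNIV)) \<and>
     (\<forall>n s h x. (h, x) \<in> Hhat n \<longrightarrow> d n s h x \<in> Aset x)"

definition H0 :: "nat \<Rightarrow> ('e hpath \<times> 'e option) set" where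
  "H0 n = {(h, x). h \<in> extensional {..<n} \<and>
                   (\<forall>m<n. \<exists>y t. h m = (Some y, 0, t) \<and> 0 \<le> t) \<and> x \<noteq> None}"

definition Pi0_DH :: "(nat \<Rightarrow> real \<Rightarrow> 'e::polish_space hpath \<Rightarrow> 'e option \<Rightarrow> nat) set" where
  "Pi0_DH = {d. det_policy d \<and> (\<forall>n h x. (h, x) \<in> H0 n \<longrightarrow> d n 0 h x = 0)}"

definition Shat :: "nat \<Rightarrow> 'e hpath \<Rightarrow> real" where
  "Shat n \<omega> = (\<Sum>m<n. snd (snd (\<omega> m)))"

definition Nhat :: "real \<Rightarrow> 'e hpath \<Rightarrow> nat" where
  "Nhat t \<omega> = (LEAST n. t < Shat (Suc n) \<omega>)"

definition Xhat_t :: "real \<Rightarrow> 'e hpath \<Rightarrow> 'e option" where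
  "Xhat_t t \<omega> = fst (\<omega> (Nhat t \<omega>))"

definition Ahat_t :: "real \<Rightarrow> 'e hpath \<Rightarrow> nat" where
  "Ahat_t t \<omega> = fst (snd (\<omega> (Nhat t \<omega>)))"

text \<open>Ph is (the unique) Phat^pi_{(s,x)} for the SMDP with kernel Qhat_T.\<close>
definition is_Phat :: "(real \<Rightarrow> 'e::polish_space \<Rightarrow> 'e measure) \<Rightarrow> real \<Rightarrow>
    (nat \<Rightarrow> real \<Rightarrow> 'e hpath \<Rightarrow> 'e option \<Rightarrow> nat) \<Rightarrow> real \<Rightarrow> 'e \<Rightarrow> 'e hpath measure \<Rightarrow> bool" where
  "is_Phat Q T d s x Ph \<longleftrightarrow>
     prob_space Ph \<and> sets Ph = sets Omegahat \<and>
     (AE \<omega> in Ph. fst (\<omega> 0) = Some x) \<and>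
     (\<forall>n. AE \<omega> in Ph. fst (snd (\<omega> n)) = d n (s - Shat n \<omega>) (restrict \<omega> {..<n}) (fst (\<omega> n))) \<and>
     (\<forall>n t B D. 0 \<le> t \<longrightarrow> B \<in> sets Ehat \<longrightarrow>
        D \<in> sets (HhatM n \<Otimes>\<^sub>M (count_space UNIV :: nat measure)) \<longrightarrow>
        emeasure Ph {\<omega> \<in> space Ph. ((restrict \<omega> {..<n}, fst (\<omega> n)), fst (snd (\<omega> n))) \<in> D \<and>
                                    snd (snd (\<omega> n)) \<le> t \<and> fst (\<omega> (Suc n)) \<in> B}
        = (\<integral>\<^sup>+ \<omega>. indicator {\<omega> \<in> space Ph. ((restrict \<omega> {..<n}, fst (\<omega> n)), fst (snd (\<omega> n))) \<in> D} \<omega>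
                  * ennreal (Qhat Q T t B (fst (\<omega> n)) (fst (snd (\<omega> n)))) \<partial>Ph))"

definition U_val :: "('e \<Rightarrow> real) \<Rightarrow> ('e \<Rightarrow> real) \<Rightarrow> 'e hpath measure \<Rightarrow> real \<Rightarrow> ennreal" where
  "U_val c g Ph s =
     (\<integral>\<^sup>+ \<omega>. (\<integral>\<^sup>+ t \<in> {0..s}. ennreal (chat c (Xhat_t t \<omega>) (Ahat_t t \<omega>)) \<partial>lborel)
              + ennreal (ghat g (Xhat_t s \<omega>) (Ahat_t s \<omega>)) \<partial>Ph)"

definition Y0 :: "nat \<Rightarrow> (nat \<Rightarrow> 'e \<times> real) \<Rightarrow> 'e hpath \<times> 'e option" where
  "Y0 n \<omega> = (restrict (\<lambda>m. (Some (fst (\<omega> m)), 0, snd (\<omega> m))) {..<n}, Some (fst (\<omega> n)))"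

definition tau :: "(nat \<Rightarrow> real \<Rightarrow> 'e hpath \<Rightarrow> 'e option \<Rightarrow> nat) \<Rightarrow> real \<Rightarrow> (nat \<Rightarrow> 'e \<times> real) \<Rightarrow> enat" where
  "tau d s \<omega> = (if \<exists>n. d n (s - Sn n \<omega>) (fst (Y0 n \<omega>)) (snd (Y0 n \<omega>)) = 1
                then enat (LEAST n. d n (s - Sn n \<omega>) (fst (Y0 n \<omega>)) (snd (Y0 n \<omega>)) = 1)
                else \<infinity>)"

definition S_stop :: "enat \<Rightarrow> (nat \<Rightarrow> 'e \<times> real) \<Rightarrow> ereal" where
  "S_stop k \<omega> = (case k of enat n \<Rightarrow> ereal (Sn n \<omega>) | \<infinity> \<Rightarrow> lim (\<lambda>n. ereal (Sn n \<omega>)))"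

definition reward :: "('e \<Rightarrow> real) \<Rightarrow> ('e \<Rightarrow> real) \<Rightarrow> real \<Rightarrow> enat \<Rightarrow> (nat \<Rightarrow> 'e \<times> real) \<Rightarrow> ennreal" where
  "reward c g s k \<omega> =
     (if S_stop k \<omega> < ereal s
      then (\<integral>\<^sup>+ t \<in> {t. 0 \<le> t \<and> ereal t \<le> S_stop k \<omega>}. ennreal (c (Xt t \<omega>)) \<partial>lborel)
           + ennreal (g (Xt (real_of_ereal (S_stop k \<omega>)) \<omega>))
      else (\<integral>\<^sup>+ t \<in> {0..s}. ennreal (c (Xt t \<omega>)) \<partial>lborel))"

definition V_val :: "('e \<Rightarrow> real) \<Rightarrow> ('e \<Rightarrow> real) \<Rightarrow> ((nat \<Rightarrow> 'e \<times> real) \<Rightarrow> enat) \<Rightarrow>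
    (nat \<Rightarrow> 'e \<times> real) measure \<Rightarrow> real \<Rightarrow> ennreal" where
  "V_val c g \<tau> P s = (\<integral>\<^sup>+ \<omega>. reward c g s (\<tau> \<omega>) \<omega> \<partial>P)"

end

theory Submission
  imports Defs
begin

lemma space_Omega[simp]: "space Omega = UNIV"
  by (auto simp: Omega_def space_PiM space_pair_measure)

lemma space_Hist: "space (Hist n) = (\<Pi>\<^sub>E m\<in>{..<n}. UNIV) \<times> UNIV"
  by (auto simp: Hist_def space_PiM space_pair_measure)

lemma Yn_meas[measurable]: "Yn n \<in> measurable Omega (Hist n)"
  unfolding Yn_def Hist_def Omega_def by measurable

lemma Omega_comp[measurable]: "(\<lambda>\<omega>. \<omega> n) \<in> measurable Omega (borel \<Otimes>\<^sub>M borel)"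
  unfolding Omega_def by measurable
lemma Omega_fst[measurable]: "(\<lambda>\<omega>. fst (\<omega> n)) \<in> measurable Omega borel"
  unfolding Omega_def by measurable
lemma Omega_snd[measurable]: "(\<lambda>\<omega>. snd (\<omega> n)) \<in> measurable Omega borel"
  unfolding Omega_def by measurable

lemma pred_Omega_sets: "Measurable.pred Omega p \<Longrightarrow> {\<omega>. p \<omega>} \<in> sets Omega"
  by (simp add: pred_def)

definition extp :: "nat \<Rightarrow> (nat \<Rightarrow> 'e \<times> real) \<times> 'e \<Rightarrow> (nat \<Rightarrow> 'e \<times> real)" where
  "extp n y = (\<lambda>m. if m < n then fst y m else (snd y, 0))"

lemma extp_meas[measurable]: "extp n \<in> measurable (Hist n) (Omega :: (nat \<Rightarrow> 'e::polish_space \<times> real) measure)"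
  unfolding Omega_def
proof (rule measurable_PiM_single')
  fix m :: nat
  show "(\<lambda>\<omega>. extp n \<omega> m) \<in> measurable (Hist n) (borel \<Otimes>\<^sub>M borel)"
  proof (cases "m < n")
    case True
    then show ?thesis unfolding extp_def Hist_def by simp measurable
  next
    case False
    then show ?thesis unfolding extp_def Hist_def by simp measurable
  qed
next
  show "extp n \<in> space (Hist n) \<rightarrow> (\<Pi>\<^sub>E i\<in>UNIV. space (borel \<Otimes>\<^sub>M borel))"
    by (auto simp: space_pair_measure)
qed

lemma extp_Yn: "m < n \<Longrightarrow> extp n (Yn n \<omega>) m = \<omega> m" "fst (extp n (Yn n \<omega>) n) = fst (\<omega> n)"
  by (auto simp: extp_def Yn_def)

lemma kernel_meas:
  assumes "semi_Markov_kernel Q" "0 \<le> t" "B \<in> sets borel"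
  shows "(\<lambda>x. measure (Q t x) B) \<in> borel_measurable borel"
  using assms unfolding semi_Markov_kernel_def by blast

locale Px =
  fixes Q :: "real \<Rightarrow> 'e::polish_space \<Rightarrow> 'e measure" and x0 :: 'e and P
  assumes kernel: "semi_Markov_kernel Q" and Px: "is_Px Q x0 P"
begin

lemma prob: "prob_space P" using Px unfolding is_Px_def by blast
lemma setsP: "sets P = sets Omega" using Px unfolding is_Px_def by blast
lemma spaceP[simp]: "space P = UNIV" using sets_eq_imp_space_eq[OF setsP] by simp
lemma measP: "measurable P N = measurable Omega N" by (rule measurable_cong_sets[OF setsP refl])
lemma measP2: "measurable N P = measurable N Omega" by (rule measurable_cong_sets[OF refl setsP])

lemma cond:
  assumes "0 \<le> t" "B \<in> sets borel" "D \<in> sets (Hist n)"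
  shows "emeasure P {\<omega>. Yn n \<omega> \<in> D \<and> snd (\<omega> n) \<le> t \<and> fst (\<omega> (Suc n)) \<in> B}
        = (\<integral>\<^sup>+ \<omega>. indicator {\<omega>. Yn n \<omega> \<in> D} \<omega> * ennreal (measure (Q t (fst (\<omega> n))) B) \<partial>P)"
  using Px assms unfolding is_Px_def by simp

lemma K:
  assumes f[measurable]: "f \<in> borel_measurable Omega" and fdep: "\<And>\<omega>. f \<omega> = f (extp n (Yn n \<omega>))"
    and t: "0 \<le> t" and B[measurable]: "B \<in> sets borel"
  shows "(\<integral>\<^sup>+\<omega>. f \<omega> * indicator {\<omega>. snd (\<omega> n) \<le> t \<and> fst (\<omega> (Suc n)) \<in> B} \<omega> \<partial>P)
       = (\<integral>\<^sup>+\<omega>. f \<omega> * ennreal (measure (Q t (fst (\<omega> n))) B) \<partial>P)"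
proof -
  let ?A = "{\<omega>. snd (\<omega> n) \<le> t \<and> fst (\<omega> (Suc n)) \<in> B}"
  let ?q = "\<lambda>\<omega>. ennreal (measure (Q t (fst (\<omega> n))) B)"
  have qm: "(\<lambda>x. measure (Q t x) B) \<in> borel_measurable borel" using kernel_meas[OF kernel t B] .
  have qr[measurable]: "(\<lambda>\<omega>. measure (Q t (fst (\<omega> n))) B) \<in> borel_measurable Omega"
    by (rule measurable_compose[OF Omega_fst qm])
  have [measurable]: "?q \<in> borel_measurable Omega" by measurable
  have "Measurable.pred Omega (\<lambda>\<omega>. snd (\<omega> n) \<le> t \<and> fst (\<omega> (Suc n)) \<in> B)"
    by measurable
  then have [measurable]: "?A \<in> sets Omega" by (simp add: pred_def)
  have Ym: "Yn n \<in> measurable P (Hist n)" by (simp add: measP)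
  have Ypre: "\<And>D. D \<in> sets (Hist n) \<Longrightarrow> Yn n -` D \<in> sets P"
    using measurable_sets[OF Ym] by simp
  define \<nu>1 where "\<nu>1 = distr (density P (indicator ?A)) (Hist n) (Yn n)"
  define \<nu>2 where "\<nu>2 = distr (density P ?q) (Hist n) (Yn n)"
  have eq: "\<nu>1 = \<nu>2"
  proof (rule measure_eqI)
    show "sets \<nu>1 = sets \<nu>2" by (simp add: \<nu>1_def \<nu>2_def)
    fix D assume "D \<in> sets \<nu>1"
    then have D[measurable]: "D \<in> sets (Hist n)" by (simp add: \<nu>1_def)
    have "Measurable.pred Omega (\<lambda>\<omega>. Yn n \<omega> \<in> D \<and> snd (\<omega> n) \<le> t \<and> fst (\<omega> (Suc n)) \<in> B)"
      by measurable
    note Ds = pred_Omega_sets[OF this]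
    have "emeasure \<nu>1 D = emeasure (density P (indicator ?A)) (Yn n -` D)"
      unfolding \<nu>1_def using Ym by (subst emeasure_distr) (auto simp: Ypre)
    also have "\<dots> = (\<integral>\<^sup>+\<omega>. indicator ?A \<omega> * indicator (Yn n -` D) \<omega> \<partial>P)"
      by (subst emeasure_density) (auto simp: Ypre measP)
    also have "\<dots> = emeasure P {\<omega>. Yn n \<omega> \<in> D \<and> snd (\<omega> n) \<le> t \<and> fst (\<omega> (Suc n)) \<in> B}"
    proof -
      have S: "{\<omega>. Yn n \<omega> \<in> D \<and> snd (\<omega> n) \<le> t \<and> fst (\<omega> (Suc n)) \<in> B} \<in> sets P"
        using Ds setsP by simp
      show ?thesis unfolding nn_integral_indicator[OF S, symmetric]
        by (rule nn_integral_cong) (auto split: split_indicator)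
    qed
    also have "\<dots> = (\<integral>\<^sup>+ \<omega>. indicator {\<omega>. Yn n \<omega> \<in> D} \<omega> * ?q \<omega> \<partial>P)"
      by (rule cond[OF t B D])
    also have "\<dots> = emeasure \<nu>2 D"
      unfolding \<nu>2_def using Ym
      by (subst emeasure_distr) (auto simp: Ypre measP, subst emeasure_density, auto simp: Ypre measP mult.commute intro!: nn_integral_cong split: split_indicator)
    finally show "emeasure \<nu>1 D = emeasure \<nu>2 D" .
  qed
  have fe[measurable]: "(\<lambda>y. f (extp n y)) \<in> borel_measurable (Hist n)" by measurable
  have "(\<integral>\<^sup>+\<omega>. f \<omega> * indicator ?A \<omega> \<partial>P) = (\<integral>\<^sup>+\<omega>. indicator ?A \<omega> * f (extp n (Yn n \<omega>)) \<partial>P)"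
    by (subst fdep) (simp add: mult.commute)
  also have "\<dots> = (\<integral>\<^sup>+y. f (extp n y) \<partial>\<nu>1)"
    unfolding \<nu>1_def using Ym
    by (subst nn_integral_distr) (auto simp: measP nn_integral_density)
  also have "\<dots> = (\<integral>\<^sup>+y. f (extp n y) \<partial>\<nu>2)" by (simp add: eq)
  also have "\<dots> = (\<integral>\<^sup>+\<omega>. ?q \<omega> * f (extp n (Yn n \<omega>)) \<partial>P)"
    unfolding \<nu>2_def using Ym
    by (subst nn_integral_distr) (auto simp: measP nn_integral_density)
  also have "\<dots> = (\<integral>\<^sup>+\<omega>. f \<omega> * ?q \<omega> \<partial>P)"
    by (subst (2) fdep) (simp add: mult.commute)
  finally show ?thesis .
qed

end

lemma Sn_meas[measurable]: "Sn n \<in> borel_measurable Omega"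
  unfolding Sn_def by measurable

lemma Sn_extp: "Sn n (extp n (Yn n \<omega>)) = Sn n \<omega>"
  unfolding Sn_def by (rule sum.cong) (auto simp: extp_Yn)

lemma Sn_Suc: "Sn (Suc n) \<omega> = Sn n \<omega> + snd (\<omega> n)"
  unfolding Sn_def by simp

lemma kernel_zero: "semi_Markov_kernel Q \<Longrightarrow> measure (Q 0 y) UNIV = 0"
proof -
  assume a: "semi_Markov_kernel Q"
  have "UNIV \<in> sets (borel :: 'a measure)" by simp
  with a show ?thesis unfolding semi_Markov_kernel_def by blast
qed

context Px begin

lemma Tpos: "AE \<omega> in P. 0 < snd (\<omega> n)"
proof (rule AE_I')
  have "Measurable.pred Omega (\<lambda>\<omega>. Yn n \<omega> \<in> space (Hist n) \<and> snd (\<omega> n) \<le> 0 \<and> fst (\<omega> (Suc n)) \<in> UNIV)"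
    by measurable
  then have S: "{\<omega>. Yn n \<omega> \<in> space (Hist n) \<and> snd (\<omega> n) \<le> 0 \<and> fst (\<omega> (Suc n)) \<in> UNIV} \<in> sets P"
    using setsP pred_Omega_sets by blast
  have "emeasure P {\<omega>. Yn n \<omega> \<in> space (Hist n) \<and> snd (\<omega> n) \<le> 0 \<and> fst (\<omega> (Suc n)) \<in> UNIV} = 0"
    by (subst cond) (auto simp: kernel_zero[OF kernel])
  with S show "{\<omega>. Yn n \<omega> \<in> space (Hist n) \<and> snd (\<omega> n) \<le> 0 \<and> fst (\<omega> (Suc n)) \<in> UNIV} \<in> null_sets P"
    by auto
  have "\<And>\<omega>. Yn n \<omega> \<in> space (Hist n)" using measurable_space[OF Yn_meas] by simp
  then show "{\<omega> \<in> space P. \<not> 0 < snd (\<omega> n)} \<subseteq> {\<omega>. Yn n \<omega> \<in> space (Hist n) \<and> snd (\<omega> n) \<le> 0 \<and> fst (\<omega> (Suc n)) \<in> UNIV}"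
    by auto
qed

lemma Tpos_all: "AE \<omega> in P. \<forall>n. 0 < snd (\<omega> n)"
  using Tpos by (simp add: AE_all_countable)

lemma step_bound:
  assumes d: "0 < \<delta>" and e: "\<forall>y. measure (Q \<delta> y) UNIV \<le> 1 - \<epsilon>"
  shows "(\<integral>\<^sup>+\<omega>. ennreal (exp (- Sn (Suc n) \<omega>)) \<partial>P)
     \<le> ennreal (exp (-\<delta>) + (1 - exp (-\<delta>)) * (1 - \<epsilon>)) * (\<integral>\<^sup>+\<omega>. ennreal (exp (- Sn n \<omega>)) \<partial>P)"
proof -
  let ?A = "{\<omega>. snd (\<omega> n) \<le> \<delta> \<and> fst (\<omega> (Suc n)) \<in> UNIV}"
  let ?f = "\<lambda>\<omega>. ennreal (exp (- Sn n \<omega>))"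
  have ed: "exp (-\<delta>) \<le> 1" "0 \<le> exp (-\<delta>)" using d by auto
  have eps: "0 \<le> 1 - \<epsilon>" using e measure_nonneg order_trans by metis
  have "Measurable.pred Omega (\<lambda>\<omega>. snd (\<omega> n) \<le> \<delta> \<and> fst (\<omega> (Suc n)) \<in> UNIV)" by measurable
  then have [measurable]: "?A \<in> sets Omega" using pred_Omega_sets by blast
  have pw: "AE \<omega> in P. ennreal (exp (- Sn (Suc n) \<omega>)) \<le>
      ennreal (exp (-\<delta>)) * ?f \<omega> + ennreal (1 - exp (-\<delta>)) * (?f \<omega> * indicator ?A \<omega>)"
    using Tpos[of n]
  proof eventually_elim
    case (elim \<omega>)
    show ?case
    proof (cases "\<omega> \<in> ?A")
      case True
      have "exp (- Sn (Suc n) \<omega>) \<le> exp (- Sn n \<omega>)" using elim by (simp add: Sn_Suc)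
      also have "\<dots> = exp (-\<delta>) * exp (- Sn n \<omega>) + (1 - exp (-\<delta>)) * exp (- Sn n \<omega>)"
        by (simp add: algebra_simps)
      finally have "ennreal (exp (- Sn (Suc n) \<omega>)) \<le> ennreal (exp (-\<delta>) * exp (- Sn n \<omega>) + (1 - exp (-\<delta>)) * exp (- Sn n \<omega>))"
        by (rule ennreal_leI)
      also have "\<dots> = ennreal (exp (-\<delta>)) * ?f \<omega> + ennreal (1 - exp (-\<delta>)) * (?f \<omega> * indicator ?A \<omega>)"
        using True ed by (simp add: ennreal_plus[symmetric] ennreal_mult[symmetric] del: ennreal_plus)
      finally show ?thesis .
    next
      case False
      then have "\<delta> < snd (\<omega> n)" by auto
      then have "exp (- Sn (Suc n) \<omega>) \<le> exp (-\<delta>) * exp (- Sn n \<omega>)"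
        by (simp add: Sn_Suc exp_add[symmetric])
      then have "ennreal (exp (- Sn (Suc n) \<omega>)) \<le> ennreal (exp (-\<delta>) * exp (- Sn n \<omega>))"
        by (rule ennreal_leI)
      also have "\<dots> = ennreal (exp (-\<delta>)) * ?f \<omega> + ennreal (1 - exp (-\<delta>)) * (?f \<omega> * indicator ?A \<omega>)"
        using False ed by (simp add: ennreal_mult[symmetric])
      finally show ?thesis .
    qed
  qed
  let ?E = "\<integral>\<^sup>+\<omega>. ?f \<omega> \<partial>P"
  let ?J = "\<integral>\<^sup>+\<omega>. ?f \<omega> * indicator ?A \<omega> \<partial>P"
  have "(\<integral>\<^sup>+\<omega>. ennreal (exp (- Sn (Suc n) \<omega>)) \<partial>P) \<le>
      (\<integral>\<^sup>+\<omega>. ennreal (exp (-\<delta>)) * ?f \<omega> + ennreal (1 - exp (-\<delta>)) * (?f \<omega> * indicator ?A \<omega>) \<partial>P)"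
    by (rule nn_integral_mono_AE[OF pw])
  also have "\<dots> = ennreal (exp (-\<delta>)) * ?E + ennreal (1 - exp (-\<delta>)) * ?J"
    by (subst nn_integral_add) (auto simp: measP nn_integral_cmult)
  finally have I1: "(\<integral>\<^sup>+\<omega>. ennreal (exp (- Sn (Suc n) \<omega>)) \<partial>P) \<le> ennreal (exp (-\<delta>)) * ?E + ennreal (1 - exp (-\<delta>)) * ?J" .
  have "?J = (\<integral>\<^sup>+\<omega>. ?f \<omega> * ennreal (measure (Q \<delta> (fst (\<omega> n))) UNIV) \<partial>P)"
    by (rule K) (use d in \<open>auto simp: Sn_extp\<close>)
  also have "\<dots> \<le> (\<integral>\<^sup>+\<omega>. ?f \<omega> * ennreal (1 - \<epsilon>) \<partial>P)"
    by (intro nn_integral_mono mult_left_mono ennreal_leI) (auto simp: e)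
  also have "\<dots> = ennreal (1 - \<epsilon>) * ?E"
    by (subst nn_integral_multc) (auto simp: measP mult.commute)
  finally have J: "?J \<le> ennreal (1 - \<epsilon>) * ?E" .
  have "ennreal (exp (-\<delta>)) * ?E + ennreal (1 - exp (-\<delta>)) * ?J \<le> ennreal (exp (-\<delta>)) * ?E + ennreal (1 - exp (-\<delta>)) * (ennreal (1 - \<epsilon>) * ?E)"
    by (intro add_left_mono mult_left_mono J) auto
  also have "\<dots> = (ennreal (exp (-\<delta>)) + ennreal (1 - exp (-\<delta>)) * ennreal (1 - \<epsilon>)) * ?E"
    by (simp add: distrib_right mult.assoc)
  also have "ennreal (exp (-\<delta>)) + ennreal (1 - exp (-\<delta>)) * ennreal (1 - \<epsilon>) = ennreal (exp (-\<delta>) + (1 - exp (-\<delta>)) * (1 - \<epsilon>))"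
    using ed eps by (simp add: ennreal_plus ennreal_mult)
  finally show ?thesis using I1 by (rule order_trans[rotated])
qed

lemma E_bound:
  assumes d: "0 < \<delta>" and e: "\<forall>y. measure (Q \<delta> y) UNIV \<le> 1 - \<epsilon>"
  shows "(\<integral>\<^sup>+\<omega>. ennreal (exp (- Sn n \<omega>)) \<partial>P) \<le> ennreal ((exp (-\<delta>) + (1 - exp (-\<delta>)) * (1 - \<epsilon>)) ^ n)"
proof (induction n)
  case 0
  interpret prob_space P by (rule prob)
  show ?case using emeasure_space_1 by (simp add: Sn_def)
next
  case (Suc n)
  let ?r = "exp (-\<delta>) + (1 - exp (-\<delta>)) * (1 - \<epsilon>)"
  have eps: "0 \<le> 1 - \<epsilon>" using e measure_nonneg order_trans by metis
  have r0: "0 \<le> ?r" using eps d by (intro add_nonneg_nonneg mult_nonneg_nonneg) auto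
  have "(\<integral>\<^sup>+\<omega>. ennreal (exp (- Sn (Suc n) \<omega>)) \<partial>P) \<le> ennreal ?r * (\<integral>\<^sup>+\<omega>. ennreal (exp (- Sn n \<omega>)) \<partial>P)"
    by (rule step_bound[OF d e])
  also have "\<dots> \<le> ennreal ?r * ennreal (?r ^ n)"
    by (intro mult_left_mono Suc.IH) auto
  also have "\<dots> = ennreal (?r ^ Suc n)" using r0 by (simp add: ennreal_mult[symmetric])
  finally show ?case .
qed

lemma reg:
  assumes regular: "\<exists>\<delta>>0. \<exists>\<epsilon>>0. \<forall>x. measure (Q \<delta> x) UNIV \<le> 1 - \<epsilon>"
  shows "AE \<omega> in P. \<exists>n. s \<le> Sn n \<omega>"
proof -
  interpret prob_space P by (rule prob)
  obtain \<delta> \<epsilon> where d: "0 < \<delta>" and ep: "0 < \<epsilon>" and e: "\<forall>y. measure (Q \<delta> y) UNIV \<le> 1 - \<epsilon>"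
    using regular by blast
  let ?r = "exp (-\<delta>) + (1 - exp (-\<delta>)) * (1 - \<epsilon>)"
  have eps: "0 \<le> 1 - \<epsilon>" using e measure_nonneg order_trans by metis
  have r0: "0 \<le> ?r" using eps d by (intro add_nonneg_nonneg mult_nonneg_nonneg) auto
  have "?r = 1 - (1 - exp (-\<delta>)) * \<epsilon>" by (simp add: algebra_simps)
  moreover have "0 < (1 - exp (-\<delta>)) * \<epsilon>" using d ep by (intro mult_pos_pos) auto
  ultimately have r1: "?r < 1" by linarith
  let ?N = "{\<omega>. \<forall>n. Sn n \<omega> < s}"
  have "?N \<in> sets Omega" by (rule pred_Omega_sets) measurable
  then have Ns: "?N \<in> sets P" by (simp add: setsP)
  have bnd: "measure P ?N \<le> exp s * ?r ^ n" for n
  proof -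
    have "emeasure P ?N = (\<integral>\<^sup>+\<omega>. indicator ?N \<omega> \<partial>P)" using Ns by simp
    also have "\<dots> \<le> (\<integral>\<^sup>+\<omega>. ennreal (exp s) * ennreal (exp (- Sn n \<omega>)) \<partial>P)"
    proof (rule nn_integral_mono)
      fix \<omega> show "indicator ?N \<omega> \<le> ennreal (exp s) * ennreal (exp (- Sn n \<omega>))"
      proof (cases "\<omega> \<in> ?N")
        case True
        then have "1 \<le> exp (s - Sn n \<omega>)" by (simp add: less_imp_le)
        then have "ennreal 1 \<le> ennreal (exp s * exp (- Sn n \<omega>))" by (simp add: exp_add[symmetric] ennreal_leI)
        then show ?thesis using True by (simp add: ennreal_mult)
      qed simp
    qed
    also have "\<dots> = ennreal (exp s) * (\<integral>\<^sup>+\<omega>. ennreal (exp (- Sn n \<omega>)) \<partial>P)"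
      by (subst nn_integral_cmult) (auto simp: measP)
    also have "\<dots> \<le> ennreal (exp s) * ennreal (?r ^ n)"
      by (intro mult_left_mono E_bound[OF d e]) auto
    also have "\<dots> = ennreal (exp s * ?r ^ n)" using r0 by (simp add: ennreal_mult)
    finally have "emeasure P ?N \<le> ennreal (exp s * ?r ^ n)" .
    then show ?thesis using r0 by (simp add: emeasure_eq_measure)
  qed
  have "(\<lambda>n. exp s * ?r ^ n) \<longlonglongrightarrow> exp s * 0"
    by (intro tendsto_mult tendsto_const LIMSEQ_power_zero) (use r0 r1 in auto)
  then have lim: "(\<lambda>n. exp s * ?r ^ n) \<longlonglongrightarrow> 0" by simp
  have "measure P ?N \<le> 0"
    by (rule LIMSEQ_le_const[OF lim]) (use bnd in auto)
  then have "measure P ?N = 0" using measure_nonneg[of P ?N] by linarith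
  then have "?N \<in> null_sets P" using Ns by (simp add: emeasure_eq_measure null_sets_def)
  then show ?thesis by (rule AE_I') (auto simp: not_le)
qed

end

lemma space_Ehat[simp]: "space Ehat = UNIV"
  by (simp add: Ehat_def space_measure_of_conv)

lemma sets_Ehat: "sets Ehat = sigma_sets UNIV ({Some ` B | B. B \<in> sets (borel :: 'e::polish_space measure)} \<union> {{None}})"
  unfolding Ehat_def by (rule sets_measure_of) auto

lemma Some_image_Ehat: "B \<in> sets (borel :: 'e::polish_space measure) \<Longrightarrow> Some ` B \<in> sets (Ehat :: 'e option measure)"
  unfolding sets_Ehat by (rule sigma_sets.Basic) auto

lemma None_Ehat[simp]: "{None} \<in> sets (Ehat :: 'e::polish_space option measure)"
  unfolding sets_Ehat by (rule sigma_sets.Basic) auto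

lemma Some_meas[measurable]: "Some \<in> measurable borel (Ehat :: 'e::polish_space option measure)"
  unfolding Ehat_def
proof (rule measurable_measure_of)
  fix A assume "A \<in> {Some ` B | B. B \<in> sets (borel :: 'e measure)} \<union> {{None}}"
  then consider B where "A = Some ` B" "B \<in> sets (borel :: 'e measure)" | "A = {None}" by blast
  then show "Some -` A \<inter> space borel \<in> sets borel"
  proof cases
    case 1 then show ?thesis by (simp add: inj_vimage_image_eq)
  next
    case 2
    have "Some -` {None} = ({} :: 'e set)" by auto
    with 2 show ?thesis by simp
  qed
qed auto

lemma Some_vimage_borel: "B \<in> sets (Ehat :: 'e::polish_space option measure) \<Longrightarrow> Some -` B \<in> sets (borel :: 'e measure)"
  using measurable_sets[OF Some_meas, of B] by simp

lemma Ehat_fun_meas: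
  assumes f: "(\<lambda>y. f (Some y)) \<in> measurable (borel :: 'e::polish_space measure) N" and N: "f None \<in> space N"
  shows "f \<in> measurable (Ehat :: 'e option measure) N"
proof (rule measurableI)
  fix x show "f x \<in> space N" using N measurable_space[OF f] by (cases x) auto
next
  fix A assume A: "A \<in> sets N"
  let ?S = "Some ` ((\<lambda>y. f (Some y)) -` A \<inter> space borel)"
  have S: "?S \<in> sets Ehat"
    by (rule Some_image_Ehat) (rule measurable_sets[OF f A])
  show "f -` A \<inter> space Ehat \<in> sets Ehat"
  proof (cases "f None \<in> A")
    case True
    have "f -` A \<inter> space Ehat = ?S \<union> {None}"
    proof (intro set_eqI)
      fix x show "x \<in> f -` A \<inter> space Ehat \<longleftrightarrow> x \<in> ?S \<union> {None}"
        using True by (cases x) auto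
    qed
    then show ?thesis using S None_Ehat by (metis sets.Un)
  next
    case False
    have "f -` A \<inter> space Ehat = ?S"
    proof (intro set_eqI)
      fix x show "x \<in> f -` A \<inter> space Ehat \<longleftrightarrow> x \<in> ?S"
        using False by (cases x) auto
    qed
    then show ?thesis using S by simp
  qed
qed

lemma notNone_meas[measurable]: "Measurable.pred Ehat (\<lambda>x. x \<noteq> None)"
  by (rule Ehat_fun_meas) auto

lemma space_StepM[simp]: "space StepM = UNIV"
  by (simp add: StepM_def space_pair_measure)

lemma space_Omegahat[simp]: "space Omegahat = UNIV"
  by (simp add: Omegahat_def space_PiM)

lemma space_HhatM: "space (HhatM n) = (\<Pi>\<^sub>E m\<in>{..<n}. UNIV) \<times> UNIV"
  by (simp add: HhatM_def space_pair_measure space_PiM)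

lemma Oh_comp[measurable]: "(\<lambda>\<omega>. \<omega> n) \<in> measurable Omegahat StepM"
  unfolding Omegahat_def by measurable
lemma step_x[measurable]: "fst \<in> measurable StepM Ehat"
  unfolding StepM_def by (rule measurable_fst)
lemma step_a[measurable]: "(\<lambda>v. fst (snd v)) \<in> measurable StepM (count_space UNIV)"
  unfolding StepM_def by measurable
lemma step_t[measurable]: "(\<lambda>v. snd (snd v)) \<in> borel_measurable StepM"
  unfolding StepM_def by measurable
lemma Oh_x[measurable]: "(\<lambda>\<omega>. fst (\<omega> n)) \<in> measurable Omegahat Ehat"
  by (rule measurable_compose[OF Oh_comp step_x])
lemma Oh_a[measurable]: "(\<lambda>\<omega>. fst (snd (\<omega> n))) \<in> measurable Omegahat (count_space UNIV)"
  by (rule measurable_compose[OF Oh_comp step_a])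
lemma Oh_t[measurable]: "(\<lambda>\<omega>. snd (snd (\<omega> n))) \<in> borel_measurable Omegahat"
  by (rule measurable_compose[OF Oh_comp step_t])

lemma pred_Oh_sets: "Measurable.pred Omegahat p \<Longrightarrow> {\<omega>. p \<omega>} \<in> sets Omegahat"
  by (simp add: pred_def)

definition Hn :: "nat \<Rightarrow> 'e hpath \<Rightarrow> 'e hpath \<times> 'e option" where
  "Hn n \<omega> = (restrict \<omega> {..<n}, fst (\<omega> n))"

lemma Hn_meas[measurable]: "Hn n \<in> measurable Omegahat (HhatM n)"
  unfolding Hn_def HhatM_def Omegahat_def by measurable

lemma HhatM_h[measurable]: "m < n \<Longrightarrow> (\<lambda>hx. fst hx m) \<in> measurable (HhatM n) StepM"
  unfolding HhatM_def by measurable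
lemma HhatM_hx[measurable]: "m < n \<Longrightarrow> (\<lambda>hx. fst (fst hx m)) \<in> measurable (HhatM n) Ehat"
  by (rule measurable_compose[OF HhatM_h step_x])
lemma HhatM_ha[measurable]: "m < n \<Longrightarrow> (\<lambda>hx. fst (snd (fst hx m))) \<in> measurable (HhatM n) (count_space UNIV)"
  by (rule measurable_compose[OF HhatM_h step_a])
lemma HhatM_ht[measurable]: "m < n \<Longrightarrow> (\<lambda>hx. snd (snd (fst hx m))) \<in> borel_measurable (HhatM n)"
  by (rule measurable_compose[OF HhatM_h step_t])
lemma HhatM_x[measurable]: "snd \<in> measurable (HhatM n) Ehat"
  unfolding HhatM_def by measurable

lemma Aset_iff: "a \<in> Aset x \<longleftrightarrow> a = 1 \<or> (a = 0 \<and> x \<noteq> None)"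
  by (cases x) (auto simp: Aset_def)

lemma Hhat_alt: "Hhat n = {hx \<in> space (HhatM n). \<forall>m\<in>{..<n}. 0 \<le> snd (snd (fst hx m)) \<and>
   (fst (snd (fst hx m)) = 1 \<or> (fst (snd (fst hx m)) = 0 \<and> fst (fst hx m) \<noteq> None))}"
  unfolding Hhat_def by (auto simp: Aset_iff)

lemma Hhat_sets[measurable]: "Hhat n \<in> sets (HhatM n)"
  unfolding Hhat_alt by measurable

definition Shh :: "nat \<Rightarrow> 'e hpath \<times> 'e option \<Rightarrow> real" where
  "Shh n hx = (\<Sum>m<n. snd (snd (fst hx m)))"

lemma Shh_meas[measurable]: "Shh n \<in> borel_measurable (HhatM n)"
  unfolding Shh_def by measurable

definition kact :: "(nat \<Rightarrow> real \<Rightarrow> 'e::polish_space hpath \<Rightarrow> 'e option \<Rightarrow> nat) \<Rightarrow> real \<Rightarrow> nat \<Rightarrow> 'e hpath \<times> 'e option \<Rightarrow> nat" where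
  "kact d s n hx = (if hx \<in> Hhat n then d n (s - Shh n hx) (fst hx) (snd hx) else 0)"

lemma kact_meas[measurable]:
  assumes "det_policy d"
  shows "kact d s n \<in> measurable (HhatM n) (count_space UNIV)"
proof -
  have dm: "(\<lambda>(s, hx). d n s (fst hx) (snd hx))
            \<in> measurable (restrict_space ((borel :: real measure) \<Otimes>\<^sub>M HhatM n) (UNIV \<times> Hhat n)) (count_space UNIV)"
    using assms unfolding det_policy_def by blast
  have pm: "(\<lambda>hx. (s - Shh n hx, hx)) \<in> measurable (restrict_space (HhatM n) (Hhat n)) (restrict_space ((borel :: real measure) \<Otimes>\<^sub>M HhatM n) (UNIV \<times> Hhat n))"
  proof (rule measurable_restrict_space3)
    show "(\<lambda>hx. (s - Shh n hx, hx)) \<in> measurable (HhatM n) ((borel :: real measure) \<Otimes>\<^sub>M HhatM n)"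
      by measurable
  qed auto
  have "(\<lambda>hx. d n (s - Shh n hx) (fst hx) (snd hx)) \<in> measurable (restrict_space (HhatM n) (Hhat n)) (count_space UNIV)"
    using measurable_compose[OF pm dm] by simp
  note F = this
  have "{hx \<in> space (HhatM n). hx \<in> Hhat n} = Hhat n"
    using sets.sets_into_space[OF Hhat_sets] by blast
  then have S: "{hx \<in> space (HhatM n). hx \<in> Hhat n} \<in> sets (HhatM n)" using Hhat_sets by simp
  have c0: "(\<lambda>hx. 0::nat) \<in> measurable (restrict_space (HhatM n) {hx. hx \<notin> Hhat n}) (count_space UNIV)"
    by (rule measurable_const) simp
  have "(\<lambda>hx. if hx \<in> Hhat n then d n (s - Shh n hx) (fst hx) (snd hx) else 0) \<in> measurable (HhatM n) (count_space UNIV)"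
    by (rule measurable_If_restrict_space_iff[OF S, THEN iffD2]) (simp add: F c0)
  then show ?thesis unfolding kact_def[abs_def] .
qed

lemma UNIV_Ehat[simp]: "UNIV \<in> sets Ehat"
  using sets.top[of Ehat] by simp

lemma Qhat_zero: "semi_Markov_kernel Q \<Longrightarrow> 0 \<le> T \<Longrightarrow> Qhat Q T 0 UNIV y a = 0"
  by (cases y) (auto simp: Qhat_def kernel_zero)

lemma Qhat_meas:
  assumes k: "semi_Markov_kernel Q" and t: "0 \<le> t" and B: "B \<in> sets Ehat"
  shows "(\<lambda>p. Qhat Q T t B (snd (fst p)) (snd p)) \<in> borel_measurable (HhatM n \<Otimes>\<^sub>M count_space UNIV)"
proof -
  have "(\<lambda>y. Qhat Q T t B y a) \<in> borel_measurable Ehat" for a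
  proof (rule Ehat_fun_meas)
    have "(\<lambda>y. measure (Q t y) (Some -` B)) \<in> borel_measurable borel"
      by (rule kernel_meas[OF k t Some_vimage_borel[OF B]])
    then show "(\<lambda>y. Qhat Q T t B (Some y) a) \<in> borel_measurable borel"
      unfolding Qhat_def by simp
  qed simp
  then have m: "(\<lambda>p. Qhat Q T t B (snd (fst p)) a) \<in> borel_measurable (HhatM n \<Otimes>\<^sub>M count_space UNIV)" for a
    by measurable
  show ?thesis
    by (rule measurable_compose_countable[where f="\<lambda>a p. Qhat Q T t B (snd (fst p)) a", OF m]) measurable
qed

locale PhM =
  fixes Q :: "real \<Rightarrow> 'e::polish_space \<Rightarrow> 'e measure" and T :: real and d and s :: real and x0 :: 'e and M
  assumes kernel: "semi_Markov_kernel Q" and pol: "det_policy d" and Tnn: "0 \<le> T"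
    and Ph: "is_Phat Q T d s x0 M"
begin

lemma probM: "prob_space M" using Ph unfolding is_Phat_def by blast
lemma setsM: "sets M = sets Omegahat" using Ph unfolding is_Phat_def by blast
lemma spaceM[simp]: "space M = UNIV" using sets_eq_imp_space_eq[OF setsM] by simp
lemma measM: "measurable M N = measurable Omegahat N" by (rule measurable_cong_sets[OF setsM refl])

lemma condM:
  assumes "0 \<le> t" "B \<in> sets Ehat" "D \<in> sets (HhatM n \<Otimes>\<^sub>M count_space UNIV)"
  shows "emeasure M {\<omega>. ((Hn n \<omega>), fst (snd (\<omega> n))) \<in> D \<and> snd (snd (\<omega> n)) \<le> t \<and> fst (\<omega> (Suc n)) \<in> B}
    = (\<integral>\<^sup>+ \<omega>. indicator {\<omega>. (Hn n \<omega>, fst (snd (\<omega> n))) \<in> D} \<omega> * ennreal (Qhat Q T t B (fst (\<omega> n)) (fst (snd (\<omega> n)))) \<partial>M)"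
  using Ph assms unfolding is_Phat_def Hn_def by simp

lemma x0M: "AE \<omega> in M. fst (\<omega> 0) = Some x0" using Ph unfolding is_Phat_def by blast

lemma actM: "AE \<omega> in M. fst (snd (\<omega> n)) = d n (s - Shat n \<omega>) (restrict \<omega> {..<n}) (fst (\<omega> n))"
  using Ph unfolding is_Phat_def by blast

lemma tposM: "AE \<omega> in M. 0 < snd (snd (\<omega> n))"
proof (rule AE_I')
  let ?N = "{\<omega>. (Hn n \<omega>, fst (snd (\<omega> n))) \<in> space (HhatM n \<Otimes>\<^sub>M count_space UNIV) \<and> snd (snd (\<omega> n)) \<le> 0 \<and> fst (\<omega> (Suc n)) \<in> UNIV}"
  have "?N \<in> sets Omegahat" by (rule pred_Oh_sets) measurable
  then have S: "?N \<in> sets M" by (simp add: setsM)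
  have "emeasure M ?N = 0"
    by (subst condM) (auto simp: Qhat_zero[OF kernel Tnn])
  with S show "?N \<in> null_sets M" by auto
  have "\<And>\<omega>. (Hn n \<omega>, fst (snd (\<omega> n))) \<in> space (HhatM n \<Otimes>\<^sub>M count_space UNIV)"
    by (auto simp: space_pair_measure space_HhatM Hn_def)
  then show "{\<omega> \<in> space M. \<not> 0 < snd (snd (\<omega> n))} \<subseteq> ?N" by auto
qed

lemma Hn_in_Hhat:
  assumes t: "\<forall>m. 0 < snd (snd (\<omega> m))"
    and a: "\<forall>m. fst (snd (\<omega> m)) = d m (s - Shat m \<omega>) (restrict \<omega> {..<m}) (fst (\<omega> m))"
  shows "Hn n \<omega> \<in> Hhat n"
proof (induction n)
  case 0
  show ?case by (simp add: Hhat_def Hn_def space_HhatM restrict_def)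
next
  case (Suc n)
  have "fst (snd (\<omega> n)) \<in> Aset (fst (\<omega> n))"
    using pol Suc a unfolding det_policy_def Hn_def by simp
  moreover have "0 \<le> snd (snd (\<omega> n))" using t less_imp_le by blast
  ultimately show ?case using Suc
    by (auto simp: Hhat_def Hn_def space_HhatM less_Suc_eq)
qed

lemma inHM: "AE \<omega> in M. \<forall>n. Hn n \<omega> \<in> Hhat n"
proof -
  have "AE \<omega> in M. \<forall>m. 0 < snd (snd (\<omega> m))" using tposM by (simp add: AE_all_countable)
  moreover have "AE \<omega> in M. \<forall>m. fst (snd (\<omega> m)) = d m (s - Shat m \<omega>) (restrict \<omega> {..<m}) (fst (\<omega> m))"
    using actM by (simp add: AE_all_countable)
  ultimately show ?thesis by eventually_elim (use Hn_in_Hhat in blast)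
qed

lemma Shh_Hn: "Shh n (Hn n \<omega>) = Shat n \<omega>"
  unfolding Shh_def Hn_def Shat_def by simp

lemma actkM: "AE \<omega> in M. fst (snd (\<omega> n)) = kact d s n (Hn n \<omega>)"
  using inHM actM[of n]
  by eventually_elim (simp add: kact_def Shh_Hn, simp add: Hn_def)

end

lemma sets_borel_Ehat:
  "sets ((borel :: real measure) \<Otimes>\<^sub>M (Ehat :: 'e::polish_space option measure)) =
   sets (sigma UNIV {a \<times> b | a b. a \<in> range (atMost :: real \<Rightarrow> real set) \<and> b \<in> sets (Ehat :: 'e option measure)})"
proof -
  have e1: "sets (borel :: real measure) = sets (sigma UNIV (range (atMost :: real \<Rightarrow> real set)))"
    by (subst borel_eq_atMost) simp
  have "sets (sigma UNIV (sets (Ehat :: 'e option measure))) = sigma_sets UNIV (sets (Ehat :: 'e option measure))"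
    by (rule sets_measure_of) auto
  also have "\<dots> = sets Ehat" using sets.sigma_sets_eq[of Ehat] by simp
  finally have e2: "sets (Ehat :: 'e option measure) = sets (sigma UNIV (sets (Ehat :: 'e option measure)))" by (rule sym)
  have s1: "sets ((borel :: real measure) \<Otimes>\<^sub>M (Ehat :: 'e option measure)) = sets (sigma UNIV (range (atMost :: real \<Rightarrow> real set)) \<Otimes>\<^sub>M sigma UNIV (sets (Ehat :: 'e option measure)))"
    by (rule sets_pair_measure_cong[OF e1 e2])
  have c1: "\<exists>E\<subseteq>range (atMost :: real \<Rightarrow> real set). countable E \<and> (UNIV :: real set) = \<Union>E"
    by (intro exI[of _ "range (\<lambda>i::nat. {..real i})"]) (auto intro: real_arch_simple)
  have c2: "\<exists>E\<subseteq>sets (Ehat :: 'e option measure). countable E \<and> UNIV = \<Union>E"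
    by (intro exI[of _ "{UNIV}"]) auto
  have s2: "sigma UNIV (range (atMost :: real \<Rightarrow> real set)) \<Otimes>\<^sub>M sigma UNIV (sets (Ehat :: 'e option measure)) =
     sigma (UNIV \<times> UNIV) {a \<times> b | a b. a \<in> range (atMost :: real \<Rightarrow> real set) \<and> b \<in> sets (Ehat :: 'e option measure)}"
    by (rule sigma_prod[OF c1 _ c2]) auto
  show ?thesis unfolding s1 s2 by simp
qed

lemma sets_ZS_gen:
  fixes H :: "'h measure"
  shows "sets (H \<Otimes>\<^sub>M ((borel :: real measure) \<Otimes>\<^sub>M (Ehat :: 'e::polish_space option measure))) =
   sigma_sets (space H \<times> UNIV) {D \<times> ({..a} \<times> B) | D a B. D \<in> sets H \<and> B \<in> sets (Ehat :: 'e option measure)}"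
proof -
  let ?G2 = "{a \<times> b | a b. a \<in> range (atMost :: real \<Rightarrow> real set) \<and> b \<in> sets (Ehat :: 'e option measure)}"
  have "sets (sigma (space H) (sets H)) = sigma_sets (space H) (sets H)"
    by (rule sets_measure_of) (use sets.sets_into_space in auto)
  also have "\<dots> = sets H" using sets.sigma_sets_eq[of H] by simp
  finally have e1: "sets H = sets (sigma (space H) (sets H))" by (rule sym)
  have "sets (H \<Otimes>\<^sub>M ((borel :: real measure) \<Otimes>\<^sub>M (Ehat :: 'e option measure))) = sets (sigma (space H) (sets H) \<Otimes>\<^sub>M sigma UNIV ?G2)"
    by (rule sets_pair_measure_cong[OF e1 sets_borel_Ehat])
  also have "sigma (space H) (sets H) \<Otimes>\<^sub>M sigma UNIV ?G2 = sigma (space H \<times> UNIV) {a \<times> b | a b. a \<in> sets H \<and> b \<in> ?G2}"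
  proof (rule sigma_prod)
    show "\<exists>E\<subseteq>sets H. countable E \<and> space H = \<Union>E"
      by (intro exI[of _ "{space H}"]) auto
    show "\<exists>E\<subseteq>?G2. countable E \<and> UNIV = \<Union>E"
    proof (intro exI[of _ "range (\<lambda>i::nat. {..real i} \<times> UNIV)"] conjI)
      show "range (\<lambda>i::nat. {..real i} \<times> UNIV) \<subseteq> ?G2"
      proof safe
        fix i :: nat
        show "\<exists>a b. {..real i} \<times> UNIV = a \<times> b \<and> a \<in> range (atMost :: real \<Rightarrow> real set) \<and> b \<in> sets (Ehat :: 'e option measure)"
          by (intro exI[of _ "{..real i}"] exI[of _ UNIV]) auto
      qed
    qed (auto intro: real_arch_simple)
  qed (use sets.space_closed in auto)
  also have "{a \<times> b | a b. a \<in> sets H \<and> b \<in> ?G2} = {D \<times> ({..a} \<times> B) | D a B. D \<in> sets H \<and> B \<in> sets (Ehat :: 'e option measure)}"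
    by blast
  finally show ?thesis
    by (subst (asm) sets_measure_of) (use sets.space_closed in auto)
qed

definition Zn :: "nat \<Rightarrow> 'e hpath \<Rightarrow> ((('e hpath \<times> 'e option) \<times> nat) \<times> (real \<times> 'e option))" where
  "Zn n \<omega> = ((Hn n \<omega>, fst (snd (\<omega> n))), (snd (snd (\<omega> n)), fst (\<omega> (Suc n))))"

definition ZS :: "nat \<Rightarrow> ((('e::polish_space hpath \<times> 'e option) \<times> nat) \<times> (real \<times> 'e option)) measure" where
  "ZS n = (HhatM n \<Otimes>\<^sub>M count_space UNIV) \<Otimes>\<^sub>M ((borel :: real measure) \<Otimes>\<^sub>M Ehat)"

definition gsuc :: "nat \<Rightarrow> ((('e hpath \<times> 'e option) \<times> nat) \<times> (real \<times> 'e option)) \<Rightarrow> 'e hpath \<times> 'e option" where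
  "gsuc n p = ((fst (fst (fst p)))(n := (snd (fst (fst p)), snd (fst p), fst (snd p))), snd (snd p))"

lemma Zn_meas[measurable]: "Zn n \<in> measurable Omegahat (ZS n)"
  unfolding Zn_def ZS_def by measurable

lemma Hn_Suc: "Hn (Suc n) \<omega> = gsuc n (Zn n \<omega>)"
  unfolding Hn_def gsuc_def Zn_def by (auto simp: restrict_def fun_eq_iff)

lemma gsuc_meas[measurable]: "gsuc n \<in> measurable (ZS n) (HhatM (Suc n))"
proof -
  have h[measurable]: "(\<lambda>p. fst (fst p)) \<in> measurable (ZS n) (HhatM n)"
    unfolding ZS_def by measurable
  have "(\<lambda>p. (fst (fst (fst p)))(n := (snd (fst (fst p)), snd (fst p), fst (snd p)))) \<in> measurable (ZS n) (\<Pi>\<^sub>M m\<in>{..<Suc n}. StepM)"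
  proof (rule measurable_PiM_single')
    fix i assume "i \<in> {..<Suc n}"
    then have "i = n \<or> i < n" by auto
    then show "(\<lambda>p. ((fst (fst (fst p)))(n := (snd (fst (fst p)), snd (fst p), fst (snd p)))) i) \<in> measurable (ZS n) StepM"
    proof
      assume i: "i = n"
      have e: "(\<lambda>p. ((fst (fst (fst p)))(n := (snd (fst (fst p)), snd (fst p), fst (snd p)))) i) = (\<lambda>p. (snd (fst (fst p)), snd (fst p), fst (snd p)))"
        using i by (simp add: fun_eq_iff)
      have "(\<lambda>p. (snd (fst (fst p)), snd (fst p), fst (snd p))) \<in> measurable (ZS n) StepM"
        unfolding ZS_def StepM_def HhatM_def by measurable
      then show ?thesis unfolding e .
    next
      assume i: "i < n"
      then have m: "(\<lambda>p. fst (fst (fst p)) i) \<in> measurable (ZS n) StepM"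
        by (intro measurable_compose[OF h HhatM_h]) simp
      have e: "(\<lambda>p. ((fst (fst (fst p)))(n := (snd (fst (fst p)), snd (fst p), fst (snd p)))) i) = (\<lambda>p. fst (fst (fst p)) i)"
        using i by (simp add: fun_eq_iff)
      show ?thesis unfolding e by (rule m)
    qed
  next
    show "(\<lambda>p. (fst (fst (fst p)))(n := (snd (fst (fst p)), snd (fst p), fst (snd p)))) \<in> space (ZS n) \<rightarrow> (\<Pi>\<^sub>E i\<in>{..<Suc n}. space StepM)"
    proof
      fix p assume "p \<in> space (ZS n)"
      then have "fst (fst p) \<in> space (HhatM n)" using measurable_space[OF h] by blast
      then have "fst (fst (fst p)) \<in> extensional {..<n}" by (auto simp: space_HhatM PiE_def mem_Times_iff)
      then have "(fst (fst (fst p)))(n := (snd (fst (fst p)), snd (fst p), fst (snd p))) \<in> extensional {..<Suc n}"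
        by (simp add: extensional_def)
      then show "(fst (fst (fst p)))(n := (snd (fst (fst p)), snd (fst p), fst (snd p))) \<in> (\<Pi>\<^sub>E i\<in>{..<Suc n}. space StepM)"
        by (simp add: PiE_def)
    qed
  qed
  moreover have "(\<lambda>p. snd (snd p)) \<in> measurable (ZS n) Ehat" unfolding ZS_def by measurable
  ultimately have "(\<lambda>p. ((fst (fst (fst p)))(n := (snd (fst (fst p)), snd (fst p), fst (snd p))), snd (snd p))) \<in> measurable (ZS n) ((\<Pi>\<^sub>M m\<in>{..<Suc n}. StepM) \<Otimes>\<^sub>M Ehat)"
    by (rule measurable_Pair)
  then show ?thesis unfolding gsuc_def[abs_def] HhatM_def[of "Suc n"] .
qed

context PhM begin

lemma kact_m[measurable]: "kact d s n \<in> measurable (HhatM n) (count_space UNIV)"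
  by (rule kact_meas[OF pol])

definition phi :: "nat \<Rightarrow> (('e hpath \<times> 'e option) \<times> nat) set \<Rightarrow> real \<Rightarrow> 'e option set \<Rightarrow> 'e hpath \<times> 'e option \<Rightarrow> ennreal" where
  "phi n D a B hx = indicator D (hx, kact d s n hx) * ennreal (Qhat Q T a B (snd hx) (kact d s n hx))"

lemma phi_meas:
  assumes "0 \<le> a" "B \<in> sets Ehat" "D \<in> sets (HhatM n \<Otimes>\<^sub>M count_space UNIV)"
  shows "phi n D a B \<in> borel_measurable (HhatM n)"
proof -
  have p[measurable]: "(\<lambda>hx. (hx, kact d s n hx)) \<in> measurable (HhatM n) (HhatM n \<Otimes>\<^sub>M count_space UNIV)"
    by measurable
  have q: "(\<lambda>hx. Qhat Q T a B (snd hx) (kact d s n hx)) \<in> borel_measurable (HhatM n)"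
    using measurable_compose[OF p Qhat_meas[OF kernel assms(1,2), where T=T and n=n]] by simp
  show ?thesis unfolding phi_def[abs_def] using q assms(3) by measurable
qed

lemma gen_eq:
  assumes a: "0 \<le> a" and B: "B \<in> sets Ehat" and D: "D \<in> sets (HhatM n \<Otimes>\<^sub>M count_space UNIV)"
  shows "emeasure M {\<omega>. (Hn n \<omega>, fst (snd (\<omega> n))) \<in> D \<and> snd (snd (\<omega> n)) \<le> a \<and> fst (\<omega> (Suc n)) \<in> B}
     = (\<integral>\<^sup>+hx. phi n D a B hx \<partial>distr M (HhatM n) (Hn n))"
proof -
  have "emeasure M {\<omega>. (Hn n \<omega>, fst (snd (\<omega> n))) \<in> D \<and> snd (snd (\<omega> n)) \<le> a \<and> fst (\<omega> (Suc n)) \<in> B}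
     = (\<integral>\<^sup>+ \<omega>. indicator {\<omega>. (Hn n \<omega>, fst (snd (\<omega> n))) \<in> D} \<omega> * ennreal (Qhat Q T a B (fst (\<omega> n)) (fst (snd (\<omega> n)))) \<partial>M)"
    by (rule condM[OF a B D])
  also have "\<dots> = (\<integral>\<^sup>+ \<omega>. phi n D a B (Hn n \<omega>) \<partial>M)"
    by (rule nn_integral_cong_AE, use actkM[of n] in eventually_elim) (auto simp: phi_def Hn_def split: split_indicator)
  also have "\<dots> = (\<integral>\<^sup>+hx. phi n D a B hx \<partial>distr M (HhatM n) (Hn n))"
    by (rule nn_integral_distr[symmetric]) (auto simp: measM phi_meas[OF a B D])
  finally show ?thesis .
qed

lemma gen_neg:
  assumes a: "a < 0"
  shows "emeasure M {\<omega>. (Hn n \<omega>, fst (snd (\<omega> n))) \<in> D \<and> snd (snd (\<omega> n)) \<le> a \<and> fst (\<omega> (Suc n)) \<in> B} = 0"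
proof -
  have "AE \<omega> in M. \<not> ((Hn n \<omega>, fst (snd (\<omega> n))) \<in> D \<and> snd (snd (\<omega> n)) \<le> a \<and> fst (\<omega> (Suc n)) \<in> B)"
    using tposM[of n] by eventually_elim (use a in auto)
  from emeasure_eq_0_AE[OF this] show ?thesis by simp
qed

end

lemma PhM_unique:
  assumes M1: "PhM Q T d s x0 M1" and M2: "PhM Q T d s x0 M2"
  shows "M1 = M2"
proof -
  interpret A: PhM Q T d s x0 M1 by (rule M1)
  interpret B: PhM Q T d s x0 M2 by (rule M2)
  have law: "distr M1 (HhatM n) (Hn n) = distr M2 (HhatM n) (Hn n)" for n
  proof (induction n)
    case 0
    let ?c = "((\<lambda>_. undefined) :: 'a hpath, Some x0)"
    have c: "?c \<in> space (HhatM 0)" by (simp add: space_HhatM)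
    have H0: "Hn 0 \<omega> = ?c" if "fst (\<omega> 0) = Some x0" for \<omega>
      using that by (simp add: Hn_def restrict_def)
    have "distr M1 (HhatM 0) (Hn 0) = distr M1 (HhatM 0) (\<lambda>_. ?c)"
      by (rule distr_cong_AE) (use A.x0M H0 c in \<open>auto simp: A.measM\<close>)
    also have "\<dots> = return (HhatM 0) ?c"
      using prob_space.distr_const[OF A.probM c] .
    also have "\<dots> = distr M2 (HhatM 0) (\<lambda>_. ?c)"
      using prob_space.distr_const[OF B.probM c] by simp
    also have "\<dots> = distr M2 (HhatM 0) (Hn 0)"
      by (rule distr_cong_AE) (use B.x0M H0 c in \<open>auto simp: B.measM\<close>)
    finally show ?case .
  next
    case (Suc n)
    let ?HD = "(HhatM n \<Otimes>\<^sub>M count_space UNIV) :: (('a hpath \<times> 'a option) \<times> nat) measure"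
    let ?E = "{D \<times> ({..a::real} \<times> B) | D a B. D \<in> sets ?HD \<and> B \<in> sets (Ehat :: 'a option measure)}"
    have pre: "Zn n -` (D \<times> ({..a} \<times> B)) = {\<omega>. (Hn n \<omega>, fst (snd (\<omega> n))) \<in> D \<and> snd (snd (\<omega> n)) \<le> a \<and> fst (\<omega> (Suc n)) \<in> B}"
      for D a B by (auto simp: Zn_def)
    have Zeq: "distr M1 (ZS n) (Zn n) = distr M2 (ZS n) (Zn n)"
    proof (rule measure_eqI_generator_eq[where E="?E" and \<Omega>="space ?HD \<times> UNIV" and A="\<lambda>i. space ?HD \<times> ({..real i} \<times> UNIV)"])
      show "Int_stable ?E"
      proof (rule Int_stableI)
        fix X Y assume "X \<in> ?E" "Y \<in> ?E"
        then obtain D a B D' a' B' where X: "X = D \<times> ({..a} \<times> B)" "D \<in> sets ?HD" "B \<in> sets Ehat"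
          and Y: "Y = D' \<times> ({..a'} \<times> B')" "D' \<in> sets ?HD" "B' \<in> sets Ehat" by blast
        have "X \<inter> Y = (D \<inter> D') \<times> ({..min a a'} \<times> (B \<inter> B'))" using X Y by auto
        then show "X \<inter> Y \<in> ?E" using X Y by blast
      qed
      show "?E \<subseteq> Pow (space ?HD \<times> UNIV)"
      proof
        fix X assume "X \<in> ?E"
        then obtain D a B where "X = D \<times> ({..a::real} \<times> (B :: 'a option set))" "D \<in> sets ?HD" by blast
        then show "X \<in> Pow (space ?HD \<times> UNIV)" using sets.sets_into_space[of D ?HD] by auto
      qed
      show "sets (distr M1 (ZS n) (Zn n)) = sigma_sets (space ?HD \<times> UNIV) ?E"
        using sets_ZS_gen[of ?HD] by (simp add: ZS_def)
      show "sets (distr M2 (ZS n) (Zn n)) = sigma_sets (space ?HD \<times> UNIV) ?E"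
        using sets_ZS_gen[of ?HD] by (simp add: ZS_def)
      show "range (\<lambda>i. space ?HD \<times> ({..real i} \<times> UNIV)) \<subseteq> ?E"
      proof safe
        fix i :: nat
        show "\<exists>D a B. space ?HD \<times> ({..real i} \<times> UNIV) = D \<times> ({..a} \<times> B) \<and> D \<in> sets ?HD \<and> B \<in> sets (Ehat :: 'a option measure)"
          by (intro exI[of _ "space ?HD"] exI[of _ "real i"] exI[of _ UNIV]) auto
      qed
      show "(\<Union>i. space ?HD \<times> ({..real i} \<times> UNIV)) = space ?HD \<times> UNIV"
        by (auto intro: real_arch_simple)
      fix i :: nat
      interpret PD: prob_space "distr M1 (ZS n) (Zn n)"
        by (rule prob_space.prob_space_distr[OF A.probM]) (simp add: A.measM)
      show "emeasure (distr M1 (ZS n) (Zn n)) (space ?HD \<times> ({..real i} \<times> UNIV)) \<noteq> \<infinity>"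
        using PD.emeasure_finite by simp
    next
      fix X assume "X \<in> ?E"
      then obtain D a B where X: "X = D \<times> ({..a} \<times> B)" and D: "D \<in> sets ?HD" and B: "B \<in> sets Ehat" by blast
      have XS: "X \<in> sets (ZS n)" using X D B by (simp add: ZS_def)
      have "emeasure (distr M1 (ZS n) (Zn n)) X = emeasure M1 {\<omega>. (Hn n \<omega>, fst (snd (\<omega> n))) \<in> D \<and> snd (snd (\<omega> n)) \<le> a \<and> fst (\<omega> (Suc n)) \<in> B}"
        using XS by (subst emeasure_distr) (auto simp: A.measM X pre)
      also have "\<dots> = emeasure M2 {\<omega>. (Hn n \<omega>, fst (snd (\<omega> n))) \<in> D \<and> snd (snd (\<omega> n)) \<le> a \<and> fst (\<omega> (Suc n)) \<in> B}"
      proof (cases "0 \<le> a")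
        case True
        show ?thesis using A.gen_eq[OF True B D] B.gen_eq[OF True B D] Suc by simp
      next
        case False
        then have "a < 0" by simp
        show ?thesis using A.gen_neg[OF \<open>a < 0\<close>] B.gen_neg[OF \<open>a < 0\<close>] by simp
      qed
      also have "\<dots> = emeasure (distr M2 (ZS n) (Zn n)) X"
        using XS by (subst emeasure_distr) (auto simp: B.measM X pre)
      finally show "emeasure (distr M1 (ZS n) (Zn n)) X = emeasure (distr M2 (ZS n) (Zn n)) X" .
    qed
    have HS: "Hn (Suc n) = gsuc n o Zn n" by (simp add: fun_eq_iff Hn_Suc)
    have "distr M1 (HhatM (Suc n)) (Hn (Suc n)) = distr (distr M1 (ZS n) (Zn n)) (HhatM (Suc n)) (gsuc n)"
      unfolding HS by (rule distr_distr[symmetric]) (auto simp: A.measM)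
    also have "\<dots> = distr (distr M2 (ZS n) (Zn n)) (HhatM (Suc n)) (gsuc n)" by (simp add: Zeq)
    also have "\<dots> = distr M2 (HhatM (Suc n)) (Hn (Suc n))"
      unfolding HS by (rule distr_distr) (auto simp: B.measM)
    finally show ?case .
  qed
  show ?thesis
  proof (rule measure_eqI_PiM_infinite[where I=UNIV and M="\<lambda>_. StepM"])
    show "sets M1 = sets (Pi\<^sub>M UNIV (\<lambda>_. StepM))" using A.setsM by (simp add: Omegahat_def)
    show "sets M2 = sets (Pi\<^sub>M UNIV (\<lambda>_. StepM))" using B.setsM by (simp add: Omegahat_def)
    show "finite_measure M1" using A.probM by (simp add: prob_space_def)
  next
    fix J :: "nat set" and Aa :: "nat \<Rightarrow> ('a option \<times> nat \<times> real) set" assume J: "finite J" and Aa: "\<And>i. i \<in> J \<Longrightarrow> Aa i \<in> sets StepM"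
    obtain N where N: "J \<subseteq> {..<N}" using finite_nat_bounded[OF J] by blast
    let ?DJ = "{hx \<in> space (HhatM N :: ('a hpath \<times> 'a option) measure). \<forall>i\<in>J. fst hx i \<in> Aa i}"
    have "Measurable.pred (HhatM N) (\<lambda>hx. \<forall>i\<in>J. fst hx i \<in> Aa i)"
    proof (rule pred_intros_countable_bounded(3))
      fix i assume "i \<in> J"
      then show "Measurable.pred (HhatM N) (\<lambda>hx. fst hx i \<in> Aa i)"
        using N Aa by (intro pred_sets2[OF _ HhatM_h]) auto
    qed
    then have DJ: "?DJ \<in> sets (HhatM N)" by (simp add: pred_def)
    have pe: "prod_emb UNIV (\<lambda>_. StepM) J (Pi\<^sub>E J Aa) = Hn N -` ?DJ"
      using N by (auto simp: prod_emb_def Hn_def space_HhatM PiE_iff subset_eq)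
    have "emeasure M1 (prod_emb UNIV (\<lambda>_. StepM) J (Pi\<^sub>E J Aa)) = emeasure (distr M1 (HhatM N) (Hn N)) ?DJ"
      using DJ by (subst emeasure_distr) (auto simp: A.measM pe)
    also have "\<dots> = emeasure (distr M2 (HhatM N) (Hn N)) ?DJ" by (simp add: law)
    also have "\<dots> = emeasure M2 (prod_emb UNIV (\<lambda>_. StepM) J (Pi\<^sub>E J Aa))"
      using DJ by (subst emeasure_distr) (auto simp: B.measM pe)
    finally show "emeasure M1 (prod_emb UNIV (\<lambda>_. StepM) J (Pi\<^sub>E J Aa)) = emeasure M2 (prod_emb UNIV (\<lambda>_. StepM) J (Pi\<^sub>E J Aa))" .
  qed
qed

definition clamp :: "(nat \<Rightarrow> 'e \<times> real) \<Rightarrow> (nat \<Rightarrow> 'e \<times> real)" where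
  "clamp \<omega> = (\<lambda>m. (fst (\<omega> m), max 0 (snd (\<omega> m))))"

definition stopk :: "(nat \<Rightarrow> real \<Rightarrow> 'e hpath \<Rightarrow> 'e option \<Rightarrow> nat) \<Rightarrow> real \<Rightarrow> nat \<Rightarrow> (nat \<Rightarrow> 'e \<times> real) \<Rightarrow> bool" where
  "stopk d s k \<omega> = (d k (s - Sn k (clamp \<omega>)) (fst (Y0 k (clamp \<omega>))) (snd (Y0 k (clamp \<omega>))) = 1)"

definition Phi :: "(nat \<Rightarrow> real \<Rightarrow> 'e hpath \<Rightarrow> 'e option \<Rightarrow> nat) \<Rightarrow> real \<Rightarrow> real \<Rightarrow> (nat \<Rightarrow> 'e \<times> real) \<Rightarrow> 'e hpath" where
  "Phi d s T \<omega> = (\<lambda>n. if (\<forall>k\<le>n. \<not> stopk d s k \<omega>) then (Some (fst (\<omega> n)), 0, snd (\<omega> n))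
      else if (\<forall>k<n. \<not> stopk d s k \<omega>) then (Some (fst (\<omega> n)), 1, T + 1) else (None, 1, T + 1))"

lemma clamp_meas[measurable]: "clamp \<in> measurable Omega Omega"
proof -
  have "(\<lambda>\<omega> n. (fst (\<omega> n), max 0 (snd (\<omega> n)))) \<in> measurable Omega (\<Pi>\<^sub>M n\<in>UNIV. (borel :: 'a measure) \<Otimes>\<^sub>M (borel :: real measure))"
    by (rule measurable_PiM_single') (measurable, auto simp: space_pair_measure)
  then show ?thesis unfolding clamp_def[abs_def] Omega_def[of] by (simp add: Omega_def)
qed

lemma Y0_meas[measurable]: "Y0 k \<in> measurable (Omega :: (nat \<Rightarrow> 'e::polish_space \<times> real) measure) (HhatM k)"
  unfolding Y0_def HhatM_def StepM_def by measurable

lemma Y0_in_Hhat: "(\<forall>m. 0 \<le> snd (\<omega> m)) \<Longrightarrow> Y0 k \<omega> \<in> Hhat k"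
  by (auto simp: Y0_def Hhat_def space_HhatM Aset_def)

lemma Y0_clamp_Hhat: "Y0 k (clamp \<omega>) \<in> Hhat k"
  by (rule Y0_in_Hhat) (simp add: clamp_def)

lemma stopk_meas[measurable]:
  assumes pol: "det_policy d"
  shows "Measurable.pred (Omega :: (nat \<Rightarrow> 'e::polish_space \<times> real) measure) (stopk d s k)"
proof -
  have dm: "(\<lambda>(s, hx). d k s (fst hx) (snd hx))
            \<in> measurable (restrict_space ((borel :: real measure) \<Otimes>\<^sub>M HhatM k) (UNIV \<times> Hhat k)) (count_space UNIV)"
    using pol unfolding det_policy_def by blast
  have f: "(\<lambda>\<omega>. (s - Sn k (clamp \<omega>), Y0 k (clamp \<omega>))) \<in> measurable (Omega :: (nat \<Rightarrow> 'e \<times> real) measure) (restrict_space ((borel :: real measure) \<Otimes>\<^sub>M HhatM k) (UNIV \<times> Hhat k))"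
  proof (rule measurable_restrict_space2)
    show "(\<lambda>\<omega>. (s - Sn k (clamp \<omega>), Y0 k (clamp \<omega>))) \<in> space Omega \<rightarrow> UNIV \<times> Hhat k"
      using Y0_clamp_Hhat by auto
    show "(\<lambda>\<omega>. (s - Sn k (clamp \<omega>), Y0 k (clamp \<omega>))) \<in> measurable (Omega :: (nat \<Rightarrow> 'e \<times> real) measure) ((borel :: real measure) \<Otimes>\<^sub>M HhatM k)"
      by measurable
  qed
  have "(\<lambda>\<omega>. d k (s - Sn k (clamp \<omega>)) (fst (Y0 k (clamp \<omega>))) (snd (Y0 k (clamp \<omega>)))) \<in> measurable (Omega :: (nat \<Rightarrow> 'e \<times> real) measure) (count_space UNIV)"
    using measurable_compose[OF f dm] by simp
  then show ?thesis unfolding stopk_def[abs_def] by measurable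
qed

lemma stopk_cong:
  assumes "\<forall>m<k. \<omega>' m = \<omega> m" "fst (\<omega>' k) = fst (\<omega> k)"
  shows "stopk d s k \<omega>' = stopk d s k \<omega>"
proof -
  have "Sn k (clamp \<omega>') = Sn k (clamp \<omega>)" unfolding Sn_def clamp_def using assms by simp
  moreover have "Y0 k (clamp \<omega>') = Y0 k (clamp \<omega>)"
    unfolding Y0_def clamp_def using assms by (auto simp: restrict_def fun_eq_iff)
  ultimately show ?thesis unfolding stopk_def by simp
qed

lemma Phi_meas[measurable]:
  assumes pol: "det_policy d"
  shows "Phi d s T \<in> measurable (Omega :: (nat \<Rightarrow> 'e::polish_space \<times> real) measure) Omegahat"
  unfolding Omegahat_def
proof (rule measurable_PiM_single')
  fix n :: nat
  note [measurable] = stopk_meas[OF pol]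
  show "(\<lambda>\<omega>. Phi d s T \<omega> n) \<in> measurable Omega StepM"
    unfolding Phi_def StepM_def by measurable
qed simp

lemma Phi_cong:
  assumes "\<forall>m<n. \<omega>' m = \<omega> m" "fst (\<omega>' n) = fst (\<omega> n)"
  shows "\<forall>m<n. Phi d s T \<omega>' m = Phi d s T \<omega> m" "fst (Phi d s T \<omega>' n) = fst (Phi d s T \<omega> n)"
    "fst (snd (Phi d s T \<omega>' n)) = fst (snd (Phi d s T \<omega> n))"
proof -
  have st: "stopk d s k \<omega>' = stopk d s k \<omega>" if "k \<le> n" for k
  proof (rule stopk_cong)
    show "\<forall>m<k. \<omega>' m = \<omega> m" using that assms by auto
    show "fst (\<omega>' k) = fst (\<omega> k)"
    proof (cases "k = n")
      case False then show ?thesis using that assms by auto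
    qed (use assms in simp)
  qed
  show "\<forall>m<n. Phi d s T \<omega>' m = Phi d s T \<omega> m"
    using assms st by (auto simp: Phi_def)
  show "fst (Phi d s T \<omega>' n) = fst (Phi d s T \<omega> n)"
    using assms st by (auto simp: Phi_def)
  show "fst (snd (Phi d s T \<omega>' n)) = fst (snd (Phi d s T \<omega> n))"
    using assms st by (auto simp: Phi_def)
qed

locale PxD = Px Q x0 P for Q :: "real \<Rightarrow> 'e::polish_space \<Rightarrow> 'e measure" and x0 P +
  fixes T :: real and d :: "nat \<Rightarrow> real \<Rightarrow> 'e hpath \<Rightarrow> 'e option \<Rightarrow> nat" and s :: real
  assumes pi: "d \<in> Pi0_DH" and Tnn: "0 \<le> T"
begin

lemma pol: "det_policy d" using pi unfolding Pi0_DH_def by blast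

lemma PhiP[measurable]: "Phi d s T \<in> measurable P Omegahat"
  using Phi_meas[OF pol] by (simp add: measP)

lemma stopP[measurable]: "Measurable.pred Omega (stopk d s k)"
  by (rule stopk_meas[OF pol])

lemma clamp_id: "\<forall>m. 0 < snd (\<omega> m) \<Longrightarrow> clamp \<omega> = \<omega>"
proof -
  assume a: "\<forall>m. 0 < snd (\<omega> m)"
  have "(fst (\<omega> m), max 0 (snd (\<omega> m))) = \<omega> m" for m
    using a[rule_format, of m] by (simp add: max_def)
  then show ?thesis by (simp add: clamp_def fun_eq_iff)
qed

lemma hist_ns:
  assumes "\<forall>k\<le>n. \<not> stopk d s k \<omega> \<or> k = n"
  shows "restrict (Phi d s T \<omega>) {..<n} = fst (Y0 n \<omega>)" "Shh n (Hn n (Phi d s T \<omega>)) = Sn n \<omega>"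
proof -
  have e: "Phi d s T \<omega> m = (Some (fst (\<omega> m)), 0, snd (\<omega> m))" if "m < n" for m
  proof -
    have "\<forall>k\<le>m. \<not> stopk d s k \<omega>"
    proof (intro allI impI)
      fix k assume "k \<le> m"
      then have "k \<le> n" "k \<noteq> n" using that by auto
      then show "\<not> stopk d s k \<omega>" using assms by blast
    qed
    then show ?thesis by (simp add: Phi_def)
  qed
  show "restrict (Phi d s T \<omega>) {..<n} = fst (Y0 n \<omega>)"
    by (auto simp: Y0_def restrict_def fun_eq_iff e)
  show "Shh n (Hn n (Phi d s T \<omega>)) = Sn n \<omega>"
    unfolding Shh_def Hn_def Sn_def by (rule sum.cong) (auto simp: e)
qed

lemma good_Hhat:
  assumes g: "\<forall>m. 0 < snd (\<omega> m)"
  shows "Hn n (Phi d s T \<omega>) \<in> Hhat n \<and> fst (snd (Phi d s T \<omega> n)) = kact d s n (Hn n (Phi d s T \<omega>))"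
proof -
  have cl: "clamp \<omega> = \<omega>" by (rule clamp_id[OF g])
  have H: "Hn n (Phi d s T \<omega>) \<in> Hhat n"
    unfolding Hhat_def Hn_def
  proof (clarsimp simp: space_HhatM)
    fix m assume "m < n"
    show "0 \<le> snd (snd (Phi d s T \<omega> m)) \<and> fst (snd (Phi d s T \<omega> m)) \<in> Aset (fst (Phi d s T \<omega> m))"
      using g[rule_format, of m] Tnn by (auto simp: Phi_def Aset_def less_imp_le)
  qed
  have inA: "kact d s n (Hn n (Phi d s T \<omega>)) \<in> Aset (fst (Phi d s T \<omega> n))"
    using H pol unfolding det_policy_def kact_def by (auto simp: Hn_def)
  have k: "kact d s n (Hn n (Phi d s T \<omega>)) = d n (s - Shh n (Hn n (Phi d s T \<omega>))) (restrict (Phi d s T \<omega>) {..<n}) (fst (Phi d s T \<omega> n))"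
    using H by (simp add: kact_def Hn_def)
  have "fst (snd (Phi d s T \<omega> n)) = kact d s n (Hn n (Phi d s T \<omega>))"
  proof (cases "\<forall>k\<le>n. \<not> stopk d s k \<omega>")
    case True
    then have "\<forall>k\<le>n. \<not> stopk d s k \<omega> \<or> k = n" by auto
    note h = hist_ns[OF this]
    have ns: "\<not> stopk d s n \<omega>" using True by auto
    have "kact d s n (Hn n (Phi d s T \<omega>)) \<noteq> 1"
      using ns unfolding k h stopk_def cl by (simp add: Phi_def True Y0_def)
    moreover have "fst (Phi d s T \<omega> n) = Some (fst (\<omega> n))" using True by (simp add: Phi_def)
    ultimately show ?thesis using inA True by (simp add: Aset_def Phi_def)
  next
    case False
    note F = this
    show ?thesis
    proof (cases "\<forall>k<n. \<not> stopk d s k \<omega>")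
      case True
      have "\<forall>k\<le>n. \<not> stopk d s k \<omega> \<or> k = n"
      proof (intro allI impI)
        fix k assume "k \<le> n"
        then have "k < n \<or> k = n" by auto
        then show "\<not> stopk d s k \<omega> \<or> k = n" using True by blast
      qed
      note h = hist_ns[OF this]
      have st: "stopk d s n \<omega>" using True F le_neq_implies_less by blast
      have "fst (Phi d s T \<omega> n) = Some (fst (\<omega> n))" using True F by (simp add: Phi_def)
      then have "kact d s n (Hn n (Phi d s T \<omega>)) = 1"
        using st unfolding k h stopk_def cl by (simp add: Y0_def)
      then show ?thesis using True F by (simp add: Phi_def)
    next
      case False
      then have "fst (Phi d s T \<omega> n) = None" "fst (snd (Phi d s T \<omega> n)) = 1" using F by (auto simp: Phi_def)
      then show ?thesis using inA by (simp add: Aset_def)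
    qed
  qed
  with H show ?thesis by blast
qed

end

lemma Shh_Hn_g: "Shh n (Hn n \<omega>) = Shat n \<omega>"
  unfolding Shh_def Hn_def Shat_def by simp

context PxD begin

abbreviation "Ph' \<equiv> distr P Omegahat (Phi d s T)"

lemma x0P: "AE \<omega> in P. fst (\<omega> 0) = x0" using Px unfolding is_Px_def by (elim conjE)

lemma Phi_fst0: "fst (Phi d s T \<omega> 0) = Some (fst (\<omega> 0))"
  by (cases "stopk d s 0 \<omega>") (simp_all add: Phi_def)

lemma x0_sets: "Some ` {x0} \<in> sets Ehat" by (rule Some_image_Ehat) (rule borel_closed, rule closed_singleton)

lemma x0_pred: "{\<omega> \<in> space Omegahat. fst (\<omega> 0) = Some x0} \<in> sets Omegahat"
proof -
  have "Measurable.pred Omegahat (\<lambda>\<omega>. fst (\<omega> 0) \<in> Some ` {x0})"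
    by (rule pred_sets2[OF x0_sets Oh_x])
  then show ?thesis by (simp add: pred_def)
qed

lemma Ph'_AE_x0: "AE \<omega> in Ph'. fst (\<omega> 0) = Some x0"
  using x0P by (subst AE_distr_iff[OF PhiP x0_pred]) (simp add: Phi_fst0)

lemma Ph'_act: "AE \<omega> in Ph'. fst (snd (\<omega> n)) = d n (s - Shat n \<omega>) (restrict \<omega> {..<n}) (fst (\<omega> n))"
proof -
  note [measurable] = kact_meas[OF pol]
  have "AE \<omega> in Ph'. Hn n \<omega> \<in> Hhat n \<and> fst (snd (\<omega> n)) = kact d s n (Hn n \<omega>)"
  proof (subst AE_distr_iff)
    show "Phi d s T \<in> measurable P Omegahat" by simp
    show "{\<omega> \<in> space Omegahat. Hn n \<omega> \<in> Hhat n \<and> fst (snd (\<omega> n)) = kact d s n (Hn n \<omega>)} \<in> sets Omegahat"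
      by measurable
    show "AE \<omega> in P. Hn n (Phi d s T \<omega>) \<in> Hhat n \<and> fst (snd (Phi d s T \<omega> n)) = kact d s n (Hn n (Phi d s T \<omega>))"
      using Tpos_all by eventually_elim (rule good_Hhat)
  qed
  then show ?thesis
    by eventually_elim (simp add: kact_def Shh_Hn_g, simp add: Hn_def)
qed

end

context PxD begin

definition AnP :: "nat \<Rightarrow> (nat \<Rightarrow> 'e \<times> real) \<Rightarrow> ('e hpath \<times> 'e option) \<times> nat" where
  "AnP n \<omega> = (Hn n (Phi d s T \<omega>), fst (snd (Phi d s T \<omega> n)))"

definition nst :: "nat \<Rightarrow> (nat \<Rightarrow> 'e \<times> real) \<Rightarrow> bool" where
  "nst n \<omega> = (\<forall>k\<le>n. \<not> stopk d s k \<omega>)"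

lemma AnP_meas[measurable]: "AnP n \<in> measurable Omega (HhatM n \<Otimes>\<^sub>M count_space UNIV)"
proof -
  have "Phi d s T \<in> measurable Omega Omegahat" by (rule Phi_meas[OF pol])
  then show ?thesis unfolding AnP_def[abs_def] by measurable
qed

lemma nst_meas[measurable]: "Measurable.pred Omega (nst n)"
  unfolding nst_def[abs_def] by measurable

lemma dep:
  assumes "\<forall>m<n. \<omega>' m = \<omega> m" "fst (\<omega>' n) = fst (\<omega> n)"
  shows "AnP n \<omega>' = AnP n \<omega>" "nst n \<omega>' = nst n \<omega>"
proof -
  note c = Phi_cong[OF assms, of d s T]
  show "AnP n \<omega>' = AnP n \<omega>"
    using c by (auto simp: AnP_def Hn_def restrict_def fun_eq_iff)
  have st: "stopk d s k \<omega>' = stopk d s k \<omega>" if "k \<le> n" for k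
  proof (rule stopk_cong)
    show "\<forall>m<k. \<omega>' m = \<omega> m" using that assms by auto
    show "fst (\<omega>' k) = fst (\<omega> k)"
    proof (cases "k = n")
      case False then show ?thesis using that assms by auto
    qed (use assms in simp)
  qed
  show "nst n \<omega>' = nst n \<omega>" unfolding nst_def using st by auto
qed

lemma dep_ext: "AnP n (extp n (Yn n \<omega>)) = AnP n \<omega>" "nst n (extp n (Yn n \<omega>)) = nst n \<omega>"
proof -
  have a: "\<forall>m<n. extp n (Yn n \<omega>) m = \<omega> m" using extp_Yn(1) by blast
  have b: "fst (extp n (Yn n \<omega>) n) = fst (\<omega> n)" by (rule extp_Yn(2))
  show "AnP n (extp n (Yn n \<omega>)) = AnP n \<omega>" "nst n (extp n (Yn n \<omega>)) = nst n \<omega>"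
    using dep[OF a b] by auto
qed

lemma Phi_n_ns: "nst n \<omega> \<Longrightarrow> Phi d s T \<omega> n = (Some (fst (\<omega> n)), 0, snd (\<omega> n))"
  by (simp add: Phi_def nst_def)
lemma Phi_n_s: "\<not> nst n \<omega> \<Longrightarrow> fst (snd (Phi d s T \<omega> n)) = 1 \<and> snd (snd (Phi d s T \<omega> n)) = T + 1"
  by (auto simp: Phi_def nst_def)
lemma Phi_Sn_ns: "nst n \<omega> \<Longrightarrow> fst (Phi d s T \<omega> (Suc n)) = Some (fst (\<omega> (Suc n)))"
  by (auto simp: Phi_def nst_def less_Suc_eq_le)
lemma Phi_Sn_s: "\<not> nst n \<omega> \<Longrightarrow> fst (Phi d s T \<omega> (Suc n)) = None"
proof -
  assume "\<not> nst n \<omega>"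
  then obtain k where k: "k \<le> n" "stopk d s k \<omega>" by (auto simp: nst_def)
  then have "\<not> (\<forall>k\<le>Suc n. \<not> stopk d s k \<omega>)" "\<not> (\<forall>k<Suc n. \<not> stopk d s k \<omega>)"
    using le_SucI less_Suc_eq_le by blast+
  then show ?thesis by (simp add: Phi_def)
qed

lemma Ph'_cond:
  assumes t: "0 \<le> t" and B: "B \<in> sets Ehat" and D: "D \<in> sets (HhatM n \<Otimes>\<^sub>M count_space UNIV)"
  shows "emeasure Ph' {\<omega> \<in> space Ph'. ((restrict \<omega> {..<n}, fst (\<omega> n)), fst (snd (\<omega> n))) \<in> D \<and> snd (snd (\<omega> n)) \<le> t \<and> fst (\<omega> (Suc n)) \<in> B}
    = (\<integral>\<^sup>+ \<omega>. indicator {\<omega> \<in> space Ph'. ((restrict \<omega> {..<n}, fst (\<omega> n)), fst (snd (\<omega> n))) \<in> D} \<omega>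
                  * ennreal (Qhat Q T t B (fst (\<omega> n)) (fst (snd (\<omega> n)))) \<partial>Ph')"
proof -
  let ?S = "{\<omega>. (Hn n \<omega>, fst (snd (\<omega> n))) \<in> D \<and> snd (snd (\<omega> n)) \<le> t \<and> fst (\<omega> (Suc n)) \<in> B}"
  let ?Sd = "{\<omega>. (Hn n \<omega>, fst (snd (\<omega> n))) \<in> D}"
  let ?c = "(if T + 1 \<le> t \<and> None \<in> B then 1 else 0) :: ennreal"
  let ?Ea = "{\<omega>. AnP n \<omega> \<in> D \<and> nst n \<omega>}"
  let ?Eb = "{\<omega>. AnP n \<omega> \<in> D \<and> \<not> nst n \<omega>}"
  let ?A = "{\<omega>. snd (\<omega> n) \<le> t \<and> fst (\<omega> (Suc n)) \<in> Some -` B}"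
  let ?q = "\<lambda>\<omega>. ennreal (measure (Q t (fst (\<omega> n))) (Some -` B))"
  have B': "Some -` B \<in> sets borel" by (rule Some_vimage_borel[OF B])
  have eqS: "{\<omega> \<in> space Ph'. ((restrict \<omega> {..<n}, fst (\<omega> n)), fst (snd (\<omega> n))) \<in> D \<and> snd (snd (\<omega> n)) \<le> t \<and> fst (\<omega> (Suc n)) \<in> B} = ?S"
    by (simp add: Hn_def)
  have eqSd: "{\<omega> \<in> space Ph'. ((restrict \<omega> {..<n}, fst (\<omega> n)), fst (snd (\<omega> n))) \<in> D} = ?Sd"
    by (simp add: Hn_def)
  have Sm: "?S \<in> sets Omegahat" by (rule pred_Oh_sets) (use D B in measurable)
  have Sdm: "?Sd \<in> sets Omegahat" by (rule pred_Oh_sets) (use D in measurable)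
  have Eam[measurable]: "?Ea \<in> sets Omega" by (rule pred_Omega_sets) (use D in measurable)
  have Ebm[measurable]: "?Eb \<in> sets Omega" by (rule pred_Omega_sets) (use D in measurable)
  have Am[measurable]: "?A \<in> sets Omega" by (rule pred_Omega_sets) (use B' in measurable)
  have qm: "(\<lambda>y. measure (Q t y) (Some -` B)) \<in> borel_measurable borel" by (rule kernel_meas[OF kernel t B'])
  have qm'[measurable]: "(\<lambda>\<omega>. measure (Q t (fst (\<omega> n))) (Some -` B)) \<in> borel_measurable Omega"
    by (rule measurable_compose[OF Omega_fst qm])
  have Qm: "(\<lambda>\<omega>. Qhat Q T t B (fst (\<omega> n)) (fst (snd (\<omega> n)))) \<in> borel_measurable Omegahat"
  proof -
    have "(\<lambda>\<omega>. (Hn n \<omega>, fst (snd (\<omega> n)))) \<in> measurable Omegahat (HhatM n \<Otimes>\<^sub>M count_space UNIV)" by measurable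
    from measurable_compose[OF this Qhat_meas[OF kernel t B, where T=T and n=n]]
    show ?thesis by (simp add: Hn_def)
  qed
  have m1: "(\<lambda>\<omega>. indicator ?Ea \<omega> * indicator ?A \<omega> :: ennreal) \<in> borel_measurable P"
    unfolding measP by measurable
  have m2: "(\<lambda>\<omega>. indicator ?Eb \<omega> * ?c) \<in> borel_measurable P"
    unfolding measP by measurable
  have m3: "(\<lambda>\<omega>. indicator ?Ea \<omega> * ?q \<omega>) \<in> borel_measurable P"
    unfolding measP by measurable
  have "emeasure Ph' ?S = emeasure P (Phi d s T -` ?S)"
    using Sm by (subst emeasure_distr) auto
  also have "\<dots> = (\<integral>\<^sup>+\<omega>. indicator (Phi d s T -` ?S) \<omega> \<partial>P)"
  proof -
    have "Phi d s T -` ?S \<in> sets P" using measurable_sets[OF PhiP Sm] by simp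
    then show ?thesis by simp
  qed
  also have "\<dots> = (\<integral>\<^sup>+\<omega>. indicator ?Ea \<omega> * indicator ?A \<omega> + indicator ?Eb \<omega> * ?c \<partial>P)"
  proof (rule nn_integral_cong)
    fix \<omega>
    show "indicator (Phi d s T -` ?S) \<omega> = indicator ?Ea \<omega> * indicator ?A \<omega> + indicator ?Eb \<omega> * ?c"
    proof (cases "nst n \<omega>")
      case True
      then show ?thesis using Phi_n_ns[OF True] Phi_Sn_ns[OF True]
        by (auto simp: AnP_def split: split_indicator)
    next
      case False
      then show ?thesis using Phi_n_s[OF False] Phi_Sn_s[OF False]
        by (auto simp: AnP_def split: split_indicator)
    qed
  qed
  also have "\<dots> = (\<integral>\<^sup>+\<omega>. indicator ?Ea \<omega> * indicator ?A \<omega> \<partial>P) + (\<integral>\<^sup>+\<omega>. indicator ?Eb \<omega> * ?c \<partial>P)"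
    by (rule nn_integral_add[OF m1 m2])
  also have "(\<integral>\<^sup>+\<omega>. indicator ?Ea \<omega> * indicator ?A \<omega> \<partial>P) = (\<integral>\<^sup>+\<omega>. indicator ?Ea \<omega> * ?q \<omega> \<partial>P)"
  proof (rule K)
    show "indicator ?Ea \<in> borel_measurable Omega" by measurable
    show "\<And>\<omega>. indicator ?Ea \<omega> = (indicator ?Ea (extp n (Yn n \<omega>)) :: ennreal)"
      by (simp add: dep_ext split: split_indicator)
  qed (use t B' in auto)
  also have "(\<integral>\<^sup>+\<omega>. indicator ?Ea \<omega> * ?q \<omega> \<partial>P) + (\<integral>\<^sup>+\<omega>. indicator ?Eb \<omega> * ?c \<partial>P)
      = (\<integral>\<^sup>+\<omega>. indicator ?Ea \<omega> * ?q \<omega> + indicator ?Eb \<omega> * ?c \<partial>P)"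
    by (rule nn_integral_add[symmetric, OF m3 m2])
  also have "\<dots> = (\<integral>\<^sup>+\<omega>. indicator ?Sd (Phi d s T \<omega>) * ennreal (Qhat Q T t B (fst (Phi d s T \<omega> n)) (fst (snd (Phi d s T \<omega> n)))) \<partial>P)"
  proof (rule nn_integral_cong)
    fix \<omega>
    show "indicator ?Ea \<omega> * ?q \<omega> + indicator ?Eb \<omega> * ?c = indicator ?Sd (Phi d s T \<omega>) * ennreal (Qhat Q T t B (fst (Phi d s T \<omega> n)) (fst (snd (Phi d s T \<omega> n))))"
    proof (cases "nst n \<omega>")
      case True
      then show ?thesis using Phi_n_ns[OF True]
        by (auto simp: AnP_def Qhat_def split: split_indicator)
    next
      case False
      then show ?thesis using Phi_n_s[OF False]
        by (auto simp: AnP_def Qhat_def split: split_indicator option.split)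
    qed
  qed
  also have "\<dots> = (\<integral>\<^sup>+\<omega>. indicator ?Sd \<omega> * ennreal (Qhat Q T t B (fst (\<omega> n)) (fst (snd (\<omega> n)))) \<partial>Ph')"
    by (rule nn_integral_distr[symmetric]) (use Sdm Qm in auto)
  finally show ?thesis unfolding eqS eqSd .
qed

end

lemma Shat_meas[measurable]: "Shat n \<in> borel_measurable Omegahat"
  unfolding Shat_def by measurable

lemma Nhat_meas[measurable]: "(\<lambda>p. Nhat (snd p) (fst p)) \<in> measurable (Omegahat \<Otimes>\<^sub>M (borel :: real measure)) (count_space UNIV)"
  unfolding Nhat_def by measurable

lemma Xhat_meas[measurable]: "(\<lambda>p. Xhat_t (snd p) (fst p)) \<in> measurable (Omegahat \<Otimes>\<^sub>M (borel :: real measure)) Ehat"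
  unfolding Xhat_t_def
  by (rule measurable_compose_countable[where f="\<lambda>i p. fst (fst p i)" and g="\<lambda>p. Nhat (snd p) (fst p)"]) measurable

lemma Ahat_meas[measurable]: "(\<lambda>p. Ahat_t (snd p) (fst p)) \<in> measurable (Omegahat \<Otimes>\<^sub>M (borel :: real measure)) (count_space UNIV)"
  unfolding Ahat_t_def
  by (rule measurable_compose_countable[where f="\<lambda>i p. fst (snd (fst p i))" and g="\<lambda>p. Nhat (snd p) (fst p)"]) measurable

lemma chat_meas1:
  assumes "c \<in> borel_measurable (borel :: 'e::polish_space measure)"
  shows "(\<lambda>x. chat c x a) \<in> borel_measurable (Ehat :: 'e option measure)"
  by (rule Ehat_fun_meas) (use assms in \<open>auto simp: chat_def\<close>)

lemma ghat_meas1: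
  assumes "g \<in> borel_measurable (borel :: 'e::polish_space measure)"
  shows "(\<lambda>x. ghat g x a) \<in> borel_measurable (Ehat :: 'e option measure)"
  by (rule Ehat_fun_meas) (use assms in \<open>auto simp: ghat_def\<close>)

lemma chat_meas:
  assumes c: "c \<in> borel_measurable (borel :: 'e::polish_space measure)"
  shows "(\<lambda>p. chat c (Xhat_t (snd p) (fst p)) (Ahat_t (snd p) (fst p))) \<in> borel_measurable (Omegahat \<Otimes>\<^sub>M (borel :: real measure))"
proof (rule measurable_compose_countable[where f="\<lambda>a p. chat c (Xhat_t (snd p) (fst p)) a" and g="\<lambda>p. Ahat_t (snd p) (fst p)"])
  fix a
  show "(\<lambda>p. chat c (Xhat_t (snd p) (fst p)) a) \<in> borel_measurable (Omegahat \<Otimes>\<^sub>M (borel :: real measure))"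
    using measurable_compose[OF Xhat_meas chat_meas1[OF c, of a]] by simp
qed measurable

lemma ghat_meas:
  assumes g: "g \<in> borel_measurable (borel :: 'e::polish_space measure)"
  shows "(\<lambda>\<omega>. ghat g (Xhat_t s \<omega>) (Ahat_t s \<omega>)) \<in> borel_measurable (Omegahat :: 'e hpath measure)"
proof -
  have X: "(\<lambda>\<omega>. Xhat_t s \<omega>) \<in> measurable (Omegahat :: 'e hpath measure) Ehat"
    using measurable_compose[OF measurable_Pair[OF measurable_ident_sets[OF refl] measurable_const[of s]] Xhat_meas] by simp
  have A: "(\<lambda>\<omega>. Ahat_t s \<omega>) \<in> measurable (Omegahat :: 'e hpath measure) (count_space UNIV)"
    using measurable_compose[OF measurable_Pair[OF measurable_ident_sets[OF refl] measurable_const[of s]] Ahat_meas] by simp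
  show ?thesis
  proof (rule measurable_compose_countable[where f="\<lambda>a \<omega>. ghat g (Xhat_t s \<omega>) a", OF _ A])
    fix a show "(\<lambda>\<omega>. ghat g (Xhat_t s \<omega>) a) \<in> borel_measurable Omegahat"
      using measurable_compose[OF X ghat_meas1[OF g, of a]] by simp
  qed
qed

lemma F_meas:
  assumes c: "c \<in> borel_measurable (borel :: 'e::polish_space measure)" and g: "g \<in> borel_measurable (borel :: 'e measure)"
  shows "(\<lambda>\<omega>. (\<integral>\<^sup>+ t \<in> {0..s}. ennreal (chat c (Xhat_t t \<omega>) (Ahat_t t \<omega>)) \<partial>lborel)
              + ennreal (ghat g (Xhat_t s \<omega>) (Ahat_t s \<omega>))) \<in> borel_measurable (Omegahat :: 'e hpath measure)"
proof -
  have h: "(\<lambda>p. ennreal (chat c (Xhat_t (snd p) (fst p)) (Ahat_t (snd p) (fst p))) * indicator {0..s} (snd p))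
     \<in> borel_measurable (Omegahat \<Otimes>\<^sub>M (borel :: real measure))"
    using chat_meas[OF c] by measurable
  have h': "(\<lambda>p. ennreal (chat c (Xhat_t (snd p) (fst p)) (Ahat_t (snd p) (fst p))) * indicator {0..s} (snd p))
     \<in> borel_measurable (Omegahat \<Otimes>\<^sub>M (lborel :: real measure))"
    using h by (subst measurable_cong_sets[OF sets_pair_measure_cong[OF refl sets_lborel] refl])
  have "(\<lambda>\<omega>. \<integral>\<^sup>+ t. ennreal (chat c (Xhat_t t \<omega>) (Ahat_t t \<omega>)) * indicator {0..s} t \<partial>lborel) \<in> borel_measurable Omegahat"
    using lborel.borel_measurable_nn_integral_fst[OF h'] by simp
  then show ?thesis using ghat_meas[OF g] by measurable
qed

context PxD begin

lemma PhM_Phi: "PhM Q T d s x0 Ph'"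
proof -
  have "is_Phat Q T d s x0 Ph'"
    unfolding is_Phat_def
  proof (intro conjI allI impI)
    show "prob_space Ph'" by (rule prob_space.prob_space_distr[OF prob PhiP])
    show "sets Ph' = sets Omegahat" by simp
    show "AE \<omega> in Ph'. fst (\<omega> 0) = Some x0" by (rule Ph'_AE_x0)
    fix n show "AE \<omega> in Ph'. fst (snd (\<omega> n)) = d n (s - Shat n \<omega>) (restrict \<omega> {..<n}) (fst (\<omega> n))"
      by (rule Ph'_act)
  next
    fix n :: nat and t :: real and B :: "'e option set" and D :: "(('e hpath \<times> 'e option) \<times> nat) set"
    assume "0 \<le> t" "B \<in> sets Ehat" "D \<in> sets (HhatM n \<Otimes>\<^sub>M count_space UNIV)"
    then show "emeasure Ph' {\<omega> \<in> space Ph'. ((restrict \<omega> {..<n}, fst (\<omega> n)), fst (snd (\<omega> n))) \<in> D \<and> snd (snd (\<omega> n)) \<le> t \<and> fst (\<omega> (Suc n)) \<in> B}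
        = (\<integral>\<^sup>+ \<omega>. indicator {\<omega> \<in> space Ph'. ((restrict \<omega> {..<n}, fst (\<omega> n)), fst (snd (\<omega> n))) \<in> D} \<omega>
                  * ennreal (Qhat Q T t B (fst (\<omega> n)) (fst (snd (\<omega> n)))) \<partial>Ph')"
      by (rule Ph'_cond)
  qed
  then show ?thesis
    using kernel pol Tnn unfolding PhM_def by blast
qed

lemma Ph_eq: "is_Phat Q T d s x0 Ph \<Longrightarrow> Ph = Ph'"
  by (rule PhM_unique) (use kernel pol Tnn PhM_Phi in \<open>auto simp: PhM_def\<close>)

end

lemma Least_agree:
  fixes P P' :: "nat \<Rightarrow> bool"
  assumes "P N" "\<forall>n\<le>N. P' n = P n"
  shows "(LEAST n. P' n) = (LEAST n. P n)"
proof -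
  let ?L = "LEAST n. P n"
  have L: "P ?L" by (rule LeastI[of P, OF assms(1)])
  have LN: "?L \<le> N" by (rule Least_le[of P, OF assms(1)])
  show ?thesis
  proof (rule Least_equality)
    show "P' ?L" using L LN assms(2) by auto
    fix y assume "P' y"
    show "?L \<le> y"
    proof (rule ccontr)
      assume "\<not> ?L \<le> y"
      then have "y < ?L" by simp
      then have "\<not> P y" by (rule not_less_Least)
      moreover have "y \<le> N" using \<open>y < ?L\<close> LN by simp
      ultimately show False using \<open>P' y\<close> assms(2) by auto
    qed
  qed
qed

lemma Sn_mono:
  assumes g: "\<forall>m. 0 < snd (\<omega> m)" and "m \<le> n"
  shows "Sn m \<omega> \<le> Sn n \<omega>"
  unfolding Sn_def
  by (rule sum_mono2) (use assms in \<open>auto simp: less_imp_le\<close>)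

lemma Sn_nonneg: "\<forall>m. 0 < snd (\<omega> m) \<Longrightarrow> 0 \<le> Sn n \<omega>"
  unfolding Sn_def by (auto intro!: sum_nonneg simp: less_imp_le)

lemma Xt_at:
  assumes g: "\<forall>m. 0 < snd (\<omega> m)"
  shows "Xt (Sn k \<omega>) \<omega> = fst (\<omega> k)"
proof -
  have "(LEAST n. Sn k \<omega> < Sn (Suc n) \<omega>) = k"
  proof (rule Least_equality)
    show "Sn k \<omega> < Sn (Suc k) \<omega>" using g by (simp add: Sn_Suc)
    fix y assume "Sn k \<omega> < Sn (Suc y) \<omega>"
    then show "k \<le> y" using Sn_mono[OF g, of "Suc y" k] by (cases "k \<le> y") auto
  qed
  then show ?thesis by (simp add: Xt_def)
qed

context PxD begin

lemma stopk_good: "\<forall>m. 0 < snd (\<omega> m) \<Longrightarrow> stopk d s k \<omega> = (d k (s - Sn k \<omega>) (fst (Y0 k \<omega>)) (snd (Y0 k \<omega>)) = 1)"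
  by (simp add: stopk_def clamp_id)

lemma Phi_before: "\<forall>i\<le>m. \<not> stopk d s i \<omega> \<Longrightarrow> Phi d s T \<omega> m = (Some (fst (\<omega> m)), 0, snd (\<omega> m))"
  by (simp add: Phi_def)

lemma Phi_at: "stopk d s m \<omega> \<Longrightarrow> \<forall>i<m. \<not> stopk d s i \<omega> \<Longrightarrow> Phi d s T \<omega> m = (Some (fst (\<omega> m)), 1, T + 1)"
  by (auto simp: Phi_def)

lemma Shat_Phi: "\<forall>i<m. \<not> stopk d s i \<omega> \<Longrightarrow> Shat m (Phi d s T \<omega>) = Sn m \<omega>"
  unfolding Shat_def Sn_def by (rule sum.cong) (auto simp: Phi_before)

lemma Shat_Phi_Suc: "stopk d s k \<omega> \<Longrightarrow> \<forall>i<k. \<not> stopk d s i \<omega> \<Longrightarrow> Shat (Suc k) (Phi d s T \<omega>) = Sn k \<omega> + (T + 1)"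
proof -
  assume a: "stopk d s k \<omega>" "\<forall>i<k. \<not> stopk d s i \<omega>"
  have "Shat (Suc k) (Phi d s T \<omega>) = Shat k (Phi d s T \<omega>) + snd (snd (Phi d s T \<omega> k))"
    by (simp add: Shat_def)
  then show ?thesis using Shat_Phi[OF a(2)] Phi_at[OF a] by simp
qed

lemma Nhat_before:
  assumes g: "\<forall>m. 0 < snd (\<omega> m)" and k: "\<forall>i<k. \<not> stopk d s i \<omega>" and t: "t < Sn k \<omega>" "0 \<le> t"
  shows "Nhat t (Phi d s T \<omega>) = (LEAST n. t < Sn (Suc n) \<omega>) \<and> (LEAST n. t < Sn (Suc n) \<omega>) < k"
proof -
  have k0: "k \<noteq> 0"
  proof
    assume "k = 0"
    then have "Sn k \<omega> = 0" by (simp add: Sn_def)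
    then show False using t by simp
  qed
  then obtain N where N: "k = Suc N" by (cases k) auto
  have PN: "t < Sn (Suc N) \<omega>" using t N by simp
  have agree: "\<forall>n\<le>N. (t < Shat (Suc n) (Phi d s T \<omega>)) = (t < Sn (Suc n) \<omega>)"
  proof (intro allI impI)
    fix n assume "n \<le> N"
    then have "\<forall>i<Suc n. \<not> stopk d s i \<omega>" using k N by auto
    then show "(t < Shat (Suc n) (Phi d s T \<omega>)) = (t < Sn (Suc n) \<omega>)" by (simp add: Shat_Phi)
  qed
  have "Nhat t (Phi d s T \<omega>) = (LEAST n. t < Sn (Suc n) \<omega>)"
    unfolding Nhat_def by (rule Least_agree[OF PN agree])
  moreover have "(LEAST n. t < Sn (Suc n) \<omega>) \<le> N" by (rule Least_le[of "\<lambda>n. t < Sn (Suc n) \<omega>", OF PN])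
  ultimately show ?thesis using N by simp
qed

lemma XA_before:
  assumes g: "\<forall>m. 0 < snd (\<omega> m)" and k: "\<forall>i<k. \<not> stopk d s i \<omega>" and t: "t < Sn k \<omega>" "0 \<le> t"
  shows "Xhat_t t (Phi d s T \<omega>) = Some (Xt t \<omega>) \<and> Ahat_t t (Phi d s T \<omega>) = 0"
proof -
  note N = Nhat_before[OF g k t]
  let ?N = "LEAST n. t < Sn (Suc n) \<omega>"
  have "\<forall>i\<le>?N. \<not> stopk d s i \<omega>" using N k by auto
  then have "Phi d s T \<omega> ?N = (Some (fst (\<omega> ?N)), 0, snd (\<omega> ?N))" by (rule Phi_before)
  then show ?thesis using N by (simp add: Xhat_t_def Ahat_t_def Xt_def)
qed

lemma XA_after:
  assumes g: "\<forall>m. 0 < snd (\<omega> m)" and st: "stopk d s k \<omega>" and k: "\<forall>i<k. \<not> stopk d s i \<omega>"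
    and t: "Sn k \<omega> \<le> t" "t < Sn k \<omega> + (T + 1)"
  shows "Xhat_t t (Phi d s T \<omega>) = Some (fst (\<omega> k)) \<and> Ahat_t t (Phi d s T \<omega>) = 1"
proof -
  have "Nhat t (Phi d s T \<omega>) = k"
    unfolding Nhat_def
  proof (rule Least_equality)
    show "t < Shat (Suc k) (Phi d s T \<omega>)" using Shat_Phi_Suc[OF st k] t by simp
    fix y assume y: "t < Shat (Suc y) (Phi d s T \<omega>)"
    show "k \<le> y"
    proof (rule ccontr)
      assume "\<not> k \<le> y"
      then have yk: "Suc y \<le> k" by simp
      then have "\<forall>i<Suc y. \<not> stopk d s i \<omega>" using k by auto
      then have "Shat (Suc y) (Phi d s T \<omega>) = Sn (Suc y) \<omega>" by (rule Shat_Phi)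
      moreover have "Sn (Suc y) \<omega> \<le> Sn k \<omega>" by (rule Sn_mono[OF g yk])
      ultimately show False using y t by simp
    qed
  qed
  then show ?thesis using Phi_at[OF st k] by (simp add: Xhat_t_def Ahat_t_def)
qed

end

context PxD begin

lemma stop_ne_s:
  assumes g: "\<forall>m. 0 < snd (\<omega> m)" and st: "stopk d s k \<omega>"
  shows "Sn k \<omega> \<noteq> s"
proof
  assume e: "Sn k \<omega> = s"
  have "Y0 k \<omega> \<in> H0 k"
    using g by (auto simp: Y0_def H0_def less_imp_le)
  then have "d k 0 (fst (Y0 k \<omega>)) (snd (Y0 k \<omega>)) = 0"
    using pi unfolding Pi0_DH_def by (cases "Y0 k \<omega>") auto
  moreover have "d k (s - Sn k \<omega>) (fst (Y0 k \<omega>)) (snd (Y0 k \<omega>)) = 1"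
    using st stopk_good[OF g] by simp
  ultimately show False using e by simp
qed

lemma tau_good: "\<forall>m. 0 < snd (\<omega> m) \<Longrightarrow>
   tau d s \<omega> = (if \<exists>n. stopk d s n \<omega> then enat (LEAST n. stopk d s n \<omega>) else \<infinity>)"
  by (simp add: tau_def stopk_good)

lemma pointwise:
  assumes g: "\<forall>m. 0 < snd (\<omega> m)" and reach: "\<exists>n. s \<le> Sn n \<omega>" and s0: "0 \<le> s" and sT: "s \<le> T"
  shows "(\<integral>\<^sup>+ t \<in> {0..s}. ennreal (chat c (Xhat_t t (Phi d s T \<omega>)) (Ahat_t t (Phi d s T \<omega>))) \<partial>lborel)
          + ennreal (ghat g (Xhat_t s (Phi d s T \<omega>)) (Ahat_t s (Phi d s T \<omega>)))
        = reward c g s (tau d s \<omega>) \<omega>"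
proof (cases "\<exists>k. stopk d s k \<omega>")
  case False
  then have nst: "\<forall>i<m. \<not> stopk d s i \<omega>" for m by auto
  have Sh: "Shat m (Phi d s T \<omega>) = Sn m \<omega>" for m by (rule Shat_Phi[OF nst])
  have Ph: "Phi d s T \<omega> m = (Some (fst (\<omega> m)), 0, snd (\<omega> m))" for m
    using False by (intro Phi_before) auto
  have N: "Nhat t (Phi d s T \<omega>) = (LEAST n. t < Sn (Suc n) \<omega>)" for t
    by (simp add: Nhat_def Sh)
  have XA: "Xhat_t t (Phi d s T \<omega>) = Some (Xt t \<omega>)" "Ahat_t t (Phi d s T \<omega>) = 0" for t
    by (simp_all add: Xhat_t_def Ahat_t_def N Ph Xt_def)
  have tau: "tau d s \<omega> = \<infinity>" using False by (simp add: tau_good[OF g])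
  have inc: "incseq (\<lambda>n. ereal (Sn n \<omega>))"
    by (rule incseq_SucI) (simp add: Sn_mono[OF g])
  have "lim (\<lambda>n. ereal (Sn n \<omega>)) = (SUP n. ereal (Sn n \<omega>))"
    by (rule limI[OF LIMSEQ_SUP[OF inc]])
  moreover obtain n where "s \<le> Sn n \<omega>" using reach by blast
  ultimately have "ereal s \<le> lim (\<lambda>n. ereal (Sn n \<omega>))"
    by (metis SUP_upper UNIV_I ereal_less_eq(3) order_trans)
  then have "\<not> S_stop (tau d s \<omega>) \<omega> < ereal s" by (simp add: tau S_stop_def)
  then have r: "reward c g s (tau d s \<omega>) \<omega> = (\<integral>\<^sup>+ t \<in> {0..s}. ennreal (c (Xt t \<omega>)) \<partial>lborel)"
    by (simp add: reward_def)
  show ?thesis unfolding r by (simp add: XA chat_def ghat_def)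
next
  case True
  define k where "k = (LEAST k. stopk d s k \<omega>)"
  have st: "stopk d s k \<omega>" unfolding k_def using True by (rule LeastI_ex)
  have bef: "\<forall>i<k. \<not> stopk d s i \<omega>" unfolding k_def using not_less_Least by blast
  have tau: "tau d s \<omega> = enat k" using True by (simp add: tau_good[OF g] k_def)
  have Sst: "S_stop (tau d s \<omega>) \<omega> = ereal (Sn k \<omega>)" by (simp add: tau S_stop_def)
  have ne: "Sn k \<omega> \<noteq> s" by (rule stop_ne_s[OF g st])
  show ?thesis
  proof (cases "s < Sn k \<omega>")
    case True
    have XA: "Xhat_t t (Phi d s T \<omega>) = Some (Xt t \<omega>) \<and> Ahat_t t (Phi d s T \<omega>) = 0" if "t \<in> {0..s}" for t
      using that True by (intro XA_before[OF g bef]) auto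
    have r: "reward c g s (tau d s \<omega>) \<omega> = (\<integral>\<^sup>+ t \<in> {0..s}. ennreal (c (Xt t \<omega>)) \<partial>lborel)"
      using True by (simp add: reward_def Sst)
    have "(\<integral>\<^sup>+ t \<in> {0..s}. ennreal (chat c (Xhat_t t (Phi d s T \<omega>)) (Ahat_t t (Phi d s T \<omega>))) \<partial>lborel)
        = (\<integral>\<^sup>+ t \<in> {0..s}. ennreal (c (Xt t \<omega>)) \<partial>lborel)"
      by (rule nn_integral_cong) (auto simp: XA chat_def split: split_indicator)
    moreover have "ghat g (Xhat_t s (Phi d s T \<omega>)) (Ahat_t s (Phi d s T \<omega>)) = 0"
      using XA[of s] s0 by (simp add: ghat_def)
    ultimately show ?thesis using r by simp
  next
    case False
    then have lt: "Sn k \<omega> < s" using ne by simp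
    have r: "reward c g s (tau d s \<omega>) \<omega> =
        (\<integral>\<^sup>+ t \<in> {t. 0 \<le> t \<and> ereal t \<le> ereal (Sn k \<omega>)}. ennreal (c (Xt t \<omega>)) \<partial>lborel) + ennreal (g (fst (\<omega> k)))"
      using lt by (simp add: reward_def Sst Xt_at[OF g])
    have XAa: "Xhat_t t (Phi d s T \<omega>) = Some (fst (\<omega> k)) \<and> Ahat_t t (Phi d s T \<omega>) = 1" if "Sn k \<omega> \<le> t" "t \<le> s" for t
      using that sT Sn_nonneg[OF g, of k] by (intro XA_after[OF g st bef]) auto
    have "(\<integral>\<^sup>+ t \<in> {0..s}. ennreal (chat c (Xhat_t t (Phi d s T \<omega>)) (Ahat_t t (Phi d s T \<omega>))) \<partial>lborel)
        = (\<integral>\<^sup>+ t \<in> {t. 0 \<le> t \<and> ereal t \<le> ereal (Sn k \<omega>)}. ennreal (c (Xt t \<omega>)) \<partial>lborel)"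
    proof (rule nn_integral_cong_AE)
      show "AE t in lborel. ennreal (chat c (Xhat_t t (Phi d s T \<omega>)) (Ahat_t t (Phi d s T \<omega>))) * indicator {0..s} t
          = ennreal (c (Xt t \<omega>)) * indicator {t. 0 \<le> t \<and> ereal t \<le> ereal (Sn k \<omega>)} t"
        using AE_lborel_singleton[of "Sn k \<omega>"]
      proof eventually_elim
        case (elim t)
        show ?case
        proof (cases "0 \<le> t \<and> t < Sn k \<omega>")
          case True
          then have "Xhat_t t (Phi d s T \<omega>) = Some (Xt t \<omega>) \<and> Ahat_t t (Phi d s T \<omega>) = 0"
            by (intro XA_before[OF g bef]) auto
          then show ?thesis using True lt by (auto simp: chat_def split: split_indicator)
        next
          case False
          show ?thesis
          proof (cases "t < 0 \<or> s < t")
            case True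
            then show ?thesis using lt by (auto split: split_indicator)
          next
            case False
            then have "Sn k \<omega> < t" "t \<le> s" using \<open>\<not> (0 \<le> t \<and> t < Sn k \<omega>)\<close> elim by auto
            then have "Xhat_t t (Phi d s T \<omega>) = Some (fst (\<omega> k)) \<and> Ahat_t t (Phi d s T \<omega>) = 1"
              by (intro XAa) auto
            then show ?thesis using \<open>Sn k \<omega> < t\<close> by (auto simp: chat_def split: split_indicator)
          qed
        qed
      qed
    qed
    moreover have "ghat g (Xhat_t s (Phi d s T \<omega>)) (Ahat_t s (Phi d s T \<omega>)) = g (fst (\<omega> k))"
      using XAa[of s] lt by (simp add: ghat_def)
    ultimately show ?thesis using r by simp
  qed
qed

end

theorem theorem4p1:
  fixes Q :: "real \<Rightarrow> 'e::polish_space \<Rightarrow> 'e measure"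
    and c g :: "'e \<Rightarrow> real" and T :: real
    and d :: "nat \<Rightarrow> real \<Rightarrow> 'e hpath \<Rightarrow> 'e option \<Rightarrow> nat"
  assumes kernel: "semi_Markov_kernel Q"
    and regular: "\<exists>\<delta>>0. \<exists>\<epsilon>>0. \<forall>x. measure (Q \<delta> x) UNIV \<le> 1 - \<epsilon>"
    and c_meas: "c \<in> borel_measurable borel" and c_nonneg: "\<forall>x. 0 \<le> c x"
    and g_meas: "g \<in> borel_measurable borel" and g_nonneg: "\<forall>x. 0 \<le> g x"
    and T_nonneg: "0 \<le> T"
    and pi: "d \<in> Pi0_DH"
  shows "\<forall>x s P Ph. s \<in> {0..T} \<longrightarrow> is_Px Q x P \<longrightarrow> is_Phat Q T d s x Ph \<longrightarrow>
           U_val c g Ph s = V_val c g (tau d s) P s"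
proof (intro allI impI)
  fix x s P Ph
  assume s: "s \<in> {0..T}" and Px: "is_Px Q x P" and Ph: "is_Phat Q T d s x Ph"
  interpret PxD Q x P T d s
    by unfold_locales (use kernel Px pi T_nonneg in auto)
  have eq: "Ph = Ph'" by (rule Ph_eq[OF Ph])
  have Fm: "(\<lambda>\<omega>. (\<integral>\<^sup>+ t \<in> {0..s}. ennreal (chat c (Xhat_t t \<omega>) (Ahat_t t \<omega>)) \<partial>lborel)
              + ennreal (ghat g (Xhat_t s \<omega>) (Ahat_t s \<omega>))) \<in> borel_measurable Omegahat"
    by (rule F_meas[OF c_meas g_meas])
  have "U_val c g Ph s = (\<integral>\<^sup>+ \<omega>. (\<integral>\<^sup>+ t \<in> {0..s}. ennreal (chat c (Xhat_t t (Phi d s T \<omega>)) (Ahat_t t (Phi d s T \<omega>))) \<partial>lborel)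
              + ennreal (ghat g (Xhat_t s (Phi d s T \<omega>)) (Ahat_t s (Phi d s T \<omega>))) \<partial>P)"
    unfolding U_val_def eq by (rule nn_integral_distr) (use PhiP Fm in simp_all)
  also have "\<dots> = (\<integral>\<^sup>+ \<omega>. reward c g s (tau d s \<omega>) \<omega> \<partial>P)"
  proof (rule nn_integral_cong_AE)
    show "AE \<omega> in P. (\<integral>\<^sup>+ t \<in> {0..s}. ennreal (chat c (Xhat_t t (Phi d s T \<omega>)) (Ahat_t t (Phi d s T \<omega>))) \<partial>lborel)
              + ennreal (ghat g (Xhat_t s (Phi d s T \<omega>)) (Ahat_t s (Phi d s T \<omega>))) = reward c g s (tau d s \<omega>) \<omega>"
      using Tpos_all reg[OF regular, of s]
      by eventually_elim (rule pointwise, use s in auto)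
  qed
  also have "\<dots> = V_val c g (tau d s) P s" by (simp add: V_val_def)
  finally show "U_val c g Ph s = V_val c g (tau d s) P s" .
qed

end
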